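(* Let $\Omega_D>0$, $K>1$, $\Omega_A=K\Omega_D$, $\overline{r}_K:=K/(K+1)$, and suppose $1/2<1-\beta$ and $1-\beta\ne\overline{r}_K$. Let $\rho^b$ be the solution on $[0,1]$ of $\rho'=\frac{(K+1)\Omega_D(\rho-\overline{r}_K)}{2(\rho-1/2)}$ with $\rho(1)=1-\beta$, and set $y_b:=1-\rho^b(0)$. Suppose $\alpha>y_b$ and $\alpha\ne1-y_b$. Define $\hat\rho(0)=\alpha$ and $\hat\rho(x)=\rho^b(x)$ for $0<x\le1$. Then there is $\epsilon_1>0$ such that for every $\epsilon\in(0,\epsilon_1)$ problem (S$_\epsilon$) has a weak solution $\rho^\epsilon\in W^{1,2}(0,1)$, and $\lim_{\epsilon\to0}\rho^\epsilon=\hat\rho$ on $[0,1]$.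
   Context: Problem (S$_\epsilon$): $\tfrac{\epsilon}{2}\rho''+(2\rho-1)\rho'+\Omega_A(1-\rho)-\Omega_D\rho=0$ on $(0,1)$, $\rho(0)=\alpha$, $\rho(1)=1-\beta$. A weak solution is $\rho\in W^{1,2}(0,1)$ with these boundary values and $\int_0^1\big[\tfrac{\epsilon}{2}\rho'\varphi'-\big((2\rho-1)\rho'+\Omega_A(1-\rho)-\Omega_D\rho\big)\varphi\big]dx=0$ for all $\varphi\in W^{1,2}_0(0,1)$. (Under the hypotheses, $\rho^b$ exists on $[0,1]$ and stays strictly on the same side of $\overline{r}_K$ as $1-\beta$, with $\rho^b>1/2$.) For $\rho,\hat\rho$ on $[0,1]$ and $\Delta>0$: $\rho\in O(\hat\rho,\Delta)$ iff $\inf_{y\in[0,1],|y-x|\le\Delta}\hat\rho(y)-\Delta<\rho(x)<\sup_{y\in[0,1],|y-x|\le\Delta}\hat\rho(y)+\Delta$ for all $x\in[0,1]$; $\lim_{\epsilon\to0}\rho^\epsilon=\hat\rho$ means for every $\Delta>0$ there is $\epsilon_0>0$ with $\rho^\epsilon\in O(\hat\rho,\Delta)$ for all $\epsilon\in(0,\epsilon_0)$. *)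

theory Defs
  imports "HOL-Analysis.Analysis"
begin

text \<open>W^{1,2}(0,1) via the (absolutely) continuous representative:
  rho is in W^{1,2}(0,1) with weak derivative g iff g is square integrable on [0,1]
  and rho x = rho 0 + integral of g over [0,x] for all x in [0,1].\<close>
definition W12 :: "(real \<Rightarrow> real) \<Rightarrow> (real \<Rightarrow> real) \<Rightarrow> bool" where
  "W12 rho g \<longleftrightarrow>
     set_borel_measurable lborel {0..1} g \<and>
     set_integrable lborel {0..1} (\<lambda>t. (g t)^2) \<and>
     (\<forall>x\<in>{0..1}. rho x = rho 0 + (LINT t:{0..x}|lborel. g t))"

definition weak_sol ::
  "real \<Rightarrow> real \<Rightarrow> real \<Rightarrow> real \<Rightarrow> real \<Rightarrow> (real \<Rightarrow> real) \<Rightarrow> bool" where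
  "weak_sol eps OmA OmD alpha beta rho \<longleftrightarrow>
     (\<exists>g. W12 rho g \<and> rho 0 = alpha \<and> rho 1 = 1 - beta \<and>
        (\<forall>phi dphi. W12 phi dphi \<and> phi 0 = 0 \<and> phi 1 = 0 \<longrightarrow>
           (LINT x:{0..1}|lborel.
              eps / 2 * g x * dphi x
              - ((2 * rho x - 1) * g x + OmA * (1 - rho x) - OmD * rho x) * phi x) = 0))"

definition nbhd :: "(real \<Rightarrow> real) \<Rightarrow> real \<Rightarrow> (real \<Rightarrow> real) set" where
  "nbhd rhohat Delta = {rho. \<forall>x\<in>{0..1}.
      Inf (rhohat ` ({0..1} \<inter> {x - Delta..x + Delta})) - Delta < rho x \<and>
      rho x < Sup (rhohat ` ({0..1} \<inter> {x - Delta..x + Delta})) + Delta}"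

definition eps_lim :: "(real \<Rightarrow> real \<Rightarrow> real) \<Rightarrow> (real \<Rightarrow> real) \<Rightarrow> bool" where
  "eps_lim rhos rhohat \<longleftrightarrow>
     (\<forall>Delta>0. \<exists>eps0>0. \<forall>eps. 0 < eps \<and> eps < eps0 \<longrightarrow> rhos eps \<in> nbhd rhohat Delta)"

end

theory Submission
  imports Defs "HOL-Analysis.Analysis"
begin


fun pic :: "('a::banach \<Rightarrow> 'a) \<Rightarrow> 'a \<Rightarrow> nat \<Rightarrow> real \<Rightarrow> 'a" where
  "pic F y0 0 = (\<lambda>t. y0)"
| "pic F y0 (Suc n) = (\<lambda>t. y0 + integral {0..t} (\<lambda>s. F (pic F y0 n s)))"

definition sol :: "('a::banach \<Rightarrow> 'a) \<Rightarrow> 'a \<Rightarrow> real \<Rightarrow> 'a" where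
  "sol F y0 t = y0 + (\<Sum>i. pic F y0 (Suc i) t - pic F y0 i t)"

lemma integral_pow_Icc:
  assumes "0 \<le> t"
  shows "((\<lambda>s::real. C * s ^ k) has_integral C * (t ^ Suc k / Suc k)) {0..t}"
proof -
  have "((\<lambda>s::real. s ^ k) has_integral ((\<lambda>s. s ^ Suc k / Suc k) t - (\<lambda>s. s ^ Suc k / Suc k) 0)) {0..t}"
    apply (rule fundamental_theorem_of_calculus[OF assms])
    apply (subst has_real_derivative_iff_has_vector_derivative[symmetric])
    apply (rule has_field_derivative_at_within)
    apply (auto intro!: derivative_eq_intros simp del: of_nat_Suc)
    apply (cases k) apply (auto simp: field_simps)
    done
  then show ?thesis by (intro has_integral_mult_right) simp
qed

lemma integral_exp_Icc:
  assumes "0 \<le> t"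
  shows "((\<lambda>s::real. L * exp (L * s)) has_integral (exp (L * t) - 1)) {0..t}"
proof -
  have "((\<lambda>s::real. L * exp (L * s)) has_integral ((\<lambda>s. exp (L * s)) t - (\<lambda>s. exp (L * s)) 0)) {0..t}"
    apply (rule fundamental_theorem_of_calculus[OF assms])
    apply (subst has_real_derivative_iff_has_vector_derivative[symmetric])
    apply (rule has_field_derivative_at_within)
    by (auto intro!: derivative_eq_intros)
  then show ?thesis by simp
qed

locale lipF =
  fixes F :: "'a::banach \<Rightarrow> 'a" and L :: real
  assumes lip: "\<And>y z. norm (F y - F z) \<le> L * norm (y - z)" and L0: "L \<ge> 0"
begin

lemma F_cont: "continuous_on S F"
proof -
  have "continuous_on UNIV F"
    apply (rule lipschitz_on_continuous_on[where L=L])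
    using lip L0 by (auto simp: lipschitz_on_def dist_norm)
  then show ?thesis using continuous_on_subset by blast
qed

lemma pic_cont: "continuous_on {0..1} (pic F y0 n)"
proof (induction n)
  case 0
  then show ?case by simp
next
  case (Suc n)
  have "continuous_on {0..1} (\<lambda>s. F (pic F y0 n s))"
    using continuous_on_compose2[OF F_cont Suc] by auto
  then have "(\<lambda>s. F (pic F y0 n s)) integrable_on {0..1}"
    by (rule integrable_continuous_real)
  then have "continuous_on {0..1} (\<lambda>t. integral {0..t} (\<lambda>s. F (pic F y0 n s)))"
    by (rule indefinite_integral_continuous_1)
  then show ?case by (auto intro!: continuous_intros)
qed

lemma Fpic_int:
  assumes "t \<in> {0..1}"
  shows "(\<lambda>s. F (pic F y0 n s)) integrable_on {0..t}"
proof -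
  have "continuous_on {0..1} (\<lambda>s. F (pic F y0 n s))"
    using continuous_on_compose2[OF F_cont pic_cont] by auto
  then have "continuous_on {0..t} (\<lambda>s. F (pic F y0 n s))"
    by (rule continuous_on_subset) (use assms in auto)
  then show ?thesis by (rule integrable_continuous_real)
qed

lemma pic_step:
  assumes t: "t \<in> {0..1}"
  shows "norm (pic F y0 (Suc n) t - pic F y0 n t) \<le> norm (F y0) * L ^ n * (t ^ Suc n / fact (Suc n))"
  using t
proof (induction n arbitrary: t)
  case 0
  then show ?case by simp
next
  case (Suc n)
  let ?C = "L * (norm (F y0) * L ^ n / fact (Suc n))"
  have eq: "pic F y0 (Suc (Suc n)) t - pic F y0 (Suc n) t
      = integral {0..t} (\<lambda>s. F (pic F y0 (Suc n) s) - F (pic F y0 n s))"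
  proof -
    have e1: "pic F y0 (Suc m) t = y0 + integral {0..t} (\<lambda>s. F (pic F y0 m s))" for m by simp
    show ?thesis unfolding e1[of "Suc n"] e1[of n]
      using integral_diff[OF Fpic_int[OF Suc.prems, of y0 "Suc n"] Fpic_int[OF Suc.prems, of y0 n]]
      by simp
  qed
  have hi: "((\<lambda>s::real. ?C * s ^ Suc n) has_integral ?C * (t ^ Suc (Suc n) / Suc (Suc n))) {0..t}"
    using Suc.prems by (intro integral_pow_Icc) auto
  have "norm (integral {0..t} (\<lambda>s. F (pic F y0 (Suc n) s) - F (pic F y0 n s)))
      \<le> integral {0..t} (\<lambda>s. ?C * s ^ Suc n)"
  proof (rule integral_norm_bound_integral)
    show "(\<lambda>s. F (pic F y0 (Suc n) s) - F (pic F y0 n s)) integrable_on {0..t}"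
      using Fpic_int[OF Suc.prems] by (intro integrable_diff)
    show "(\<lambda>s. ?C * s ^ Suc n) integrable_on {0..t}" using hi by blast
    fix s assume s: "s \<in> {0..t}"
    then have s1: "s \<in> {0..1}" using Suc.prems by auto
    have "norm (F (pic F y0 (Suc n) s) - F (pic F y0 n s)) \<le> L * norm (pic F y0 (Suc n) s - pic F y0 n s)"
      by (rule lip)
    also have "\<dots> \<le> L * (norm (F y0) * L ^ n * (s ^ Suc n / fact (Suc n)))"
      using Suc.IH[OF s1] L0 by (intro mult_left_mono) auto
    also have "\<dots> = ?C * s ^ Suc n" by (simp add: field_simps)
    finally show "norm (F (pic F y0 (Suc n) s) - F (pic F y0 n s)) \<le> ?C * s ^ Suc n" .
  qed
  also have "\<dots> = ?C * (t ^ Suc (Suc n) / Suc (Suc n))" by (rule integral_unique[OF hi])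
  also have "\<dots> = norm (F y0) * L ^ Suc n * (t ^ Suc (Suc n) / fact (Suc (Suc n)))"
    by (simp add: field_simps del: of_nat_Suc fact_Suc) (simp add: fact_Suc algebra_simps)
  finally show ?case using eq by simp
qed

lemma pic_unif: "uniform_limit {0..1} (pic F y0) (sol F y0) sequentially"
proof -
  have ul: "uniform_limit {0..1} (\<lambda>n (t::real). \<Sum>i<n. pic F y0 (Suc i) t - pic F y0 i t)
      (\<lambda>t. \<Sum>i. pic F y0 (Suc i) t - pic F y0 i t) sequentially"
  proof (rule Weierstrass_m_test)
    show "summable (\<lambda>n. norm (F y0) * (inverse (fact n) * L ^ n))"
      by (intro summable_mult summable_exp)
    fix n and t :: real assume t: "t \<in> {0..1}"
    have "norm (pic F y0 (Suc n) t - pic F y0 n t) \<le> norm (F y0) * L ^ n * (t ^ Suc n / fact (Suc n))"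
      by (rule pic_step[OF t])
    also have "\<dots> \<le> norm (F y0) * L ^ n * (1 / fact n)"
    proof (intro mult_left_mono)
      have "t ^ Suc n \<le> 1" using t by (intro power_le_one) auto
      moreover have "fact n \<le> (fact (Suc n) :: real)" by (rule fact_mono) auto
      ultimately show "t ^ Suc n / fact (Suc n) \<le> 1 / fact n"
        using t by (intro frac_le) auto
    qed (use L0 in auto)
    also have "\<dots> = norm (F y0) * (inverse (fact n) * L ^ n)" by (simp add: field_simps)
    finally show "norm (pic F y0 (Suc n) t - pic F y0 n t) \<le> norm (F y0) * (inverse (fact n) * L ^ n)" .
  qed
  have "uniform_limit {0..1} (\<lambda>n (t::real). y0 + (\<Sum>i<n. pic F y0 (Suc i) t - pic F y0 i t))
      (\<lambda>t. y0 + (\<Sum>i. pic F y0 (Suc i) t - pic F y0 i t)) sequentially"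
    by (intro uniform_limit_add uniform_limit_const ul)
  moreover have "(\<lambda>n t. y0 + (\<Sum>i<n. pic F y0 (Suc i) t - pic F y0 i t)) = pic F y0"
  proof (intro ext)
    fix n and t :: real
    show "y0 + (\<Sum>i<n. pic F y0 (Suc i) t - pic F y0 i t) = pic F y0 n t"
      by (subst sum_lessThan_telescope[of "\<lambda>i. pic F y0 i t"]) simp
  qed
  ultimately show ?thesis by (simp add: sol_def[abs_def])
qed

lemma sol_cont: "continuous_on {0..1} (sol F y0)"
  by (rule uniform_limit_theorem[OF _ pic_unif]) (auto intro: always_eventually pic_cont)

lemma Fsol_cont: "continuous_on {0..1} (\<lambda>s. F (sol F y0 s))"
  using continuous_on_compose2[OF F_cont sol_cont] by auto

lemma sol_int:
  assumes t: "t \<in> {0..1}"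
  shows "sol F y0 t = y0 + integral {0..t} (\<lambda>s. F (sol F y0 s))"
proof -
  have c: "continuous_on {0..t} (\<lambda>s. F (sol F y0 s))"
    using Fsol_cont by (rule continuous_on_subset) (use t in auto)
  have l1: "(\<lambda>n. pic F y0 (Suc n) t) \<longlonglongrightarrow> sol F y0 t"
    using tendsto_uniform_limitI[OF pic_unif t] by (rule LIMSEQ_Suc)
  have "(\<lambda>n. integral {0..t} (\<lambda>s. F (pic F y0 n s))) \<longlonglongrightarrow> integral {0..t} (\<lambda>s. F (sol F y0 s))"
  proof (rule tendstoI)
    fix e :: real assume e: "e > 0"
    have "e / (L + 1) > 0" using e L0 by auto
    from uniform_limitD[OF pic_unif[of y0] this]
    show "\<forall>\<^sub>F n in sequentially. dist (integral {0..t} (\<lambda>s. F (pic F y0 n s))) (integral {0..t} (\<lambda>s. F (sol F y0 s))) < e"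
    proof eventually_elim
      case (elim n)
      have "norm (integral {0..t} (\<lambda>s. F (pic F y0 n s)) - integral {0..t} (\<lambda>s. F (sol F y0 s)))
          = norm (integral {0..t} (\<lambda>s. F (pic F y0 n s) - F (sol F y0 s)))"
        using Fpic_int[OF t] integrable_continuous_real[OF c] by (simp add: integral_diff)
      also have "\<dots> \<le> integral {0..t} (\<lambda>s. L * (e / (L + 1)))"
      proof (rule integral_norm_bound_integral)
        show "(\<lambda>s. F (pic F y0 n s) - F (sol F y0 s)) integrable_on {0..t}"
          using Fpic_int[OF t] integrable_continuous_real[OF c] by (intro integrable_diff)
        fix s assume "s \<in> {0..t}"
        then have s1: "s \<in> {0..1}" using t by auto
        have "norm (F (pic F y0 n s) - F (sol F y0 s)) \<le> L * norm (pic F y0 n s - sol F y0 s)" by (rule lip)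
        also have "\<dots> \<le> L * (e / (L + 1))"
        proof -
          have "norm (pic F y0 n s - sol F y0 s) < e / (L + 1)" using elim s1 by (auto simp: dist_norm)
          then show ?thesis using L0 by (intro mult_left_mono) auto
        qed
        finally show "norm (F (pic F y0 n s) - F (sol F y0 s)) \<le> L * (e / (L + 1))" .
      qed auto
      also have "\<dots> = t * (L * (e / (L + 1)))" using t by simp
      also have "\<dots> < e"
      proof -
        have "L * (e / (L + 1)) < e" using e L0 by (simp add: field_simps)
        moreover have "t * (L * (e / (L + 1))) \<le> L * (e / (L + 1))"
          using t e L0 by (intro mult_left_le_one_le) auto
        ultimately show ?thesis by linarith
      qed
      finally show ?case by (simp add: dist_norm)
    qed
  qed
  then have "(\<lambda>n. pic F y0 (Suc n) t) \<longlonglongrightarrow> y0 + integral {0..t} (\<lambda>s. F (sol F y0 s))"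
    by (simp add: tendsto_add)
  with l1 show ?thesis using LIMSEQ_unique by blast
qed

lemma sol_0: "sol F y0 0 = y0"
  using sol_int[of 0] by simp

lemma sol_deriv:
  assumes t: "t \<in> {0..1}"
  shows "(sol F y0 has_vector_derivative F (sol F y0 t)) (at t within {0..1})"
proof -
  have "((\<lambda>u. y0 + integral {0..u} (\<lambda>s. F (sol F y0 s))) has_vector_derivative F (sol F y0 t)) (at t within {0..1})"
    using has_vector_derivative_add[OF has_vector_derivative_const integral_has_vector_derivative[OF Fsol_cont[of y0] t]] by simp
  then show ?thesis
    by (rule has_vector_derivative_transform[OF t, rotated]) (simp add: sol_int)
qed

lemma pic_dep:
  assumes t: "t \<in> {0..1}"
  shows "norm (pic F v n t - pic F w n t) \<le> norm (v - w) * exp (L * t)"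
  using t
proof (induction n arbitrary: t)
  case 0
  have "1 \<le> exp (L * t)" using 0 L0 by auto
  then show ?case by (simp add: mult_le_cancel_left1)
next
  case (Suc n)
  have hi: "((\<lambda>s. norm (v - w) * (L * exp (L * s))) has_integral norm (v - w) * (exp (L * t) - 1)) {0..t}"
    using Suc.prems by (intro has_integral_mult_right integral_exp_Icc) auto
  have "norm (pic F v (Suc n) t - pic F w (Suc n) t)
      = norm ((v - w) + integral {0..t} (\<lambda>s. F (pic F v n s) - F (pic F w n s)))"
  proof -
    have e1: "pic F y (Suc m) t = y + integral {0..t} (\<lambda>s. F (pic F y m s))" for m y by simp
    show ?thesis unfolding e1
      by (simp add: integral_diff[OF Fpic_int[OF Suc.prems, of v n] Fpic_int[OF Suc.prems, of w n]] algebra_simps)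
  qed
  also have "\<dots> \<le> norm (v - w) + norm (integral {0..t} (\<lambda>s. F (pic F v n s) - F (pic F w n s)))"
    by (rule norm_triangle_ineq)
  also have "norm (integral {0..t} (\<lambda>s. F (pic F v n s) - F (pic F w n s)))
      \<le> integral {0..t} (\<lambda>s. norm (v - w) * (L * exp (L * s)))"
  proof (rule integral_norm_bound_integral)
    show "(\<lambda>s. F (pic F v n s) - F (pic F w n s)) integrable_on {0..t}"
      using Fpic_int[OF Suc.prems, of v n] Fpic_int[OF Suc.prems, of w n] by (intro integrable_diff)
    show "(\<lambda>s. norm (v - w) * (L * exp (L * s))) integrable_on {0..t}" using hi by blast
    fix s assume "s \<in> {0..t}"
    then have s1: "s \<in> {0..1}" using Suc.prems by auto
    have "norm (F (pic F v n s) - F (pic F w n s)) \<le> L * norm (pic F v n s - pic F w n s)" by (rule lip)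
    also have "\<dots> \<le> L * (norm (v - w) * exp (L * s))"
      using Suc.IH[OF s1] L0 by (intro mult_left_mono) auto
    finally show "norm (F (pic F v n s) - F (pic F w n s)) \<le> norm (v - w) * (L * exp (L * s))"
      by (simp add: algebra_simps)
  qed
  also have "\<dots> = norm (v - w) * (exp (L * t) - 1)" by (rule integral_unique[OF hi])
  finally show ?case by (simp add: algebra_simps)
qed

lemma sol_dep:
  assumes t: "t \<in> {0..1}"
  shows "norm (sol F v t - sol F w t) \<le> norm (v - w) * exp L"
proof -
  have lim: "(\<lambda>n. norm (pic F v n t - pic F w n t)) \<longlonglongrightarrow> norm (sol F v t - sol F w t)"
    by (intro tendsto_intros tendsto_uniform_limitI[OF pic_unif t])
  have bd: "norm (pic F v n t - pic F w n t) \<le> norm (v - w) * exp L" for n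
  proof -
    have "L * t \<le> L" using t L0 by (simp add: mult_left_le)
    then have "exp (L * t) \<le> exp L" by simp
    then show ?thesis using pic_dep[OF t, where v=v and w=w and n=n] by (meson mult_left_mono norm_ge_zero order_trans)
  qed
  show ?thesis by (rule LIMSEQ_le_const2[OF lim]) (use bd in auto)
qed

end


lemma touch_deriv:
  fixes h :: "real \<Rightarrow> real"
  assumes d: "(h has_real_derivative D) (at x within {0..1})"
    and x: "0 < x" "x \<le> 1" and hx: "h x \<le> 0" and pos: "\<And>y. 0 \<le> y \<Longrightarrow> y < x \<Longrightarrow> h y > 0"
  shows "D \<le> 0"
proof -
  have "(h has_real_derivative D) (at x within {0..x})"
    by (rule has_field_derivative_subset[OF d]) (use x in auto)
  then have "(h has_real_derivative D) (at_left x)"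
    using at_within_Icc_at_left[OF x(1)] by simp
  then have lim: "((\<lambda>y. (h y - h x) / (y - x)) \<longlongrightarrow> D) (at_left x)"
    by (simp add: has_field_derivative_iff)
  have ev: "\<forall>\<^sub>F y in at_left x. (h y - h x) / (y - x) \<le> 0"
    unfolding eventually_at_left_field
  proof (intro exI[of _ 0] conjI allI impI)
    fix y :: real assume "0 < y" and "y < x"
    then have "h y - h x > 0" using pos[of y] hx by auto
    then show "(h y - h x) / (y - x) \<le> 0" using \<open>y < x\<close> by (simp add: divide_pos_neg less_imp_le)
  qed (use x in auto)
  show ?thesis by (rule tendsto_upperbound[OF lim ev]) (simp add: trivial_limit_at_left_real)
qed

lemma left_limit_ge:
  fixes h :: "real \<Rightarrow> real"
  assumes c: "continuous_on {0..1} h" and x: "0 < x" "x \<le> 1"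
    and pos: "\<And>y. 0 \<le> y \<Longrightarrow> y < x \<Longrightarrow> h y > 0"
  shows "h x \<ge> 0"
proof -
  have "continuous_on {0..x} h" using c by (rule continuous_on_subset) (use x in auto)
  then have "(h \<longlongrightarrow> h x) (at x within {0..x})"
    using x by (auto simp: continuous_on_def)
  then have lim: "(h \<longlongrightarrow> h x) (at_left x)" using at_within_Icc_at_left[OF x(1)] by simp
  have ev: "\<forall>\<^sub>F y in at_left x. 0 \<le> h y"
    unfolding eventually_at_left_field
    by (intro exI[of _ 0] conjI allI impI) (use x pos less_imp_le in auto)
  show ?thesis by (rule tendsto_lowerbound[OF lim ev]) (simp add: trivial_limit_at_left_real)
qed

lemma compare_upper:
  fixes r V P W P' W' :: "real \<Rightarrow> real" and f :: "real \<Rightarrow> real \<Rightarrow> real" and g :: "real \<Rightarrow> real"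
  assumes cr: "continuous_on {0..1} r" and cV: "continuous_on {0..1} V"
    and cP: "continuous_on {0..1} P" and cW: "continuous_on {0..1} W"
    and dr: "\<And>x. x \<in> {0..1} \<Longrightarrow> (r has_real_derivative f (r x) (V x)) (at x within {0..1})"
    and dV: "\<And>x. x \<in> {0..1} \<Longrightarrow> (V has_real_derivative g (r x)) (at x within {0..1})"
    and dP: "\<And>x. x \<in> {0..1} \<Longrightarrow> (P has_real_derivative P' x) (at x within {0..1})"
    and dW: "\<And>x. x \<in> {0..1} \<Longrightarrow> (W has_real_derivative W' x) (at x within {0..1})"
    and fmono: "\<And>p a b. a \<le> b \<Longrightarrow> f p a \<le> f p b"
    and gmono: "\<And>a b. a \<le> b \<Longrightarrow> g a \<le> g b"
    and sP: "\<And>x. x \<in> {0..1} \<Longrightarrow> P' x > f (P x) (W x)"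
    and sW: "\<And>x. x \<in> {0..1} \<Longrightarrow> W' x > g (P x)"
    and i1: "r 0 < P 0" and i2: "V 0 < W 0"
  shows "\<forall>x\<in>{0..1}. r x < P x \<and> V x < W x"
proof (rule ccontr)
  define S where "S = {x\<in>{0..1}. P x - r x \<le> 0 \<or> W x - V x \<le> 0}"
  assume "\<not> ?thesis"
  then have ne: "S \<noteq> {}" by (auto simp: S_def)
  have cl: "closed S"
  proof -
    have "S = ({0..1} \<inter> (\<lambda>x. P x - r x) -` {..0}) \<union> ({0..1} \<inter> (\<lambda>x. W x - V x) -` {..0})"
      by (auto simp: S_def)
    moreover have "closed ({0..1} \<inter> (\<lambda>x. P x - r x) -` {..0})"
      by (intro continuous_closed_preimage continuous_intros cP cr closed_atMost closed_atLeastAtMost)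
    moreover have "closed ({0..1} \<inter> (\<lambda>x. W x - V x) -` {..0})"
      by (intro continuous_closed_preimage continuous_intros cW cV closed_atMost closed_atLeastAtMost)
    ultimately show ?thesis by auto
  qed
  have bb: "bdd_below S" by (auto simp: S_def bdd_below_def)
  define x where "x = Inf S"
  have xS: "x \<in> S" unfolding x_def by (rule closed_contains_Inf[OF ne bb cl])
  have below: "y \<notin> S" if "y < x" for y
    using that cInf_lower[OF _ bb] x_def by force
  have x01: "0 \<le> x" "x \<le> 1" using xS by (auto simp: S_def)
  have x0: "0 < x"
  proof (rule ccontr)
    assume "\<not> 0 < x" then have "x = 0" using x01 by auto
    then show False using xS i1 i2 by (auto simp: S_def)
  qed
  have strict: "P y - r y > 0 \<and> W y - V y > 0" if "0 \<le> y" "y < x" for y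
    using below[OF that(2)] that x01 by (auto simp: S_def)
  have ge1: "P x - r x \<ge> 0"
    by (rule left_limit_ge[where h="\<lambda>y. P y - r y"]) (use x0 x01 strict in \<open>auto intro!: continuous_intros cP cr\<close>)
  have ge2: "W x - V x \<ge> 0"
    by (rule left_limit_ge[where h="\<lambda>y. W y - V y"]) (use x0 x01 strict in \<open>auto intro!: continuous_intros cW cV\<close>)
  have xx: "x \<in> {0..1}" using x01 by auto
  show False
  proof (cases "P x - r x \<le> 0")
    case True
    then have eq: "P x = r x" using ge1 by auto
    have "P' x - f (r x) (V x) \<le> 0"
      by (rule touch_deriv[where h="\<lambda>y. P y - r y"])
        (use x0 x01 strict True in \<open>auto intro!: derivative_intros dP dr\<close>)
    moreover have "f (r x) (V x) \<le> f (P x) (W x)" using eq ge2 fmono by auto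
    ultimately show False using sP[OF xx] by auto
  next
    case False
    then have "W x - V x \<le> 0" using xS by (auto simp: S_def)
    then have eq: "W x = V x" using ge2 by auto
    have "W' x - g (r x) \<le> 0"
      by (rule touch_deriv[where h="\<lambda>y. W y - V y"])
        (use x0 x01 strict eq in \<open>auto intro!: derivative_intros dW dV\<close>)
    moreover have "g (r x) \<le> g (P x)" using ge1 gmono by auto
    ultimately show False using sW[OF xx] by auto
  qed
qed

lemma compare_lower:
  fixes r V Q Z Q' Z' :: "real \<Rightarrow> real" and f :: "real \<Rightarrow> real \<Rightarrow> real" and g :: "real \<Rightarrow> real"
  assumes cr: "continuous_on {0..1} r" and cV: "continuous_on {0..1} V"
    and cQ: "continuous_on {0..1} Q" and cZ: "continuous_on {0..1} Z"
    and dr: "\<And>x. x \<in> {0..1} \<Longrightarrow> (r has_real_derivative f (r x) (V x)) (at x within {0..1})"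
    and dV: "\<And>x. x \<in> {0..1} \<Longrightarrow> (V has_real_derivative g (r x)) (at x within {0..1})"
    and dQ: "\<And>x. x \<in> {0..1} \<Longrightarrow> (Q has_real_derivative Q' x) (at x within {0..1})"
    and dZ: "\<And>x. x \<in> {0..1} \<Longrightarrow> (Z has_real_derivative Z' x) (at x within {0..1})"
    and fmono: "\<And>p a b. a \<le> b \<Longrightarrow> f p a \<le> f p b"
    and gmono: "\<And>a b. a \<le> b \<Longrightarrow> g a \<le> g b"
    and sQ: "\<And>x. x \<in> {0..1} \<Longrightarrow> Q' x < f (Q x) (Z x)"
    and sZ: "\<And>x. x \<in> {0..1} \<Longrightarrow> Z' x < g (Q x)"
    and i1: "Q 0 < r 0" and i2: "Z 0 < V 0"
  shows "\<forall>x\<in>{0..1}. Q x < r x \<and> Z x < V x"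
proof -
  have "\<forall>x\<in>{0..1}. (\<lambda>x. - r x) x < (\<lambda>x. - Q x) x \<and> (\<lambda>x. - V x) x < (\<lambda>x. - Z x) x"
  proof (rule compare_upper[where f="\<lambda>p a. - f (- p) (- a)" and g="\<lambda>p. - g (- p)"
        and P'="\<lambda>x. - Q' x" and W'="\<lambda>x. - Z' x"])
    fix x :: real assume x: "x \<in> {0..1}"
    show "((\<lambda>x. - r x) has_real_derivative - f (- (- r x)) (- (- V x))) (at x within {0..1})"
      using dr[OF x] by (auto intro!: derivative_intros)
    show "((\<lambda>x. - V x) has_real_derivative - g (- (- r x))) (at x within {0..1})"
      using dV[OF x] by (auto intro!: derivative_intros)
    show "((\<lambda>x. - Q x) has_real_derivative - Q' x) (at x within {0..1})"
      using dQ[OF x] by (auto intro!: derivative_intros)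
    show "((\<lambda>x. - Z x) has_real_derivative - Z' x) (at x within {0..1})"
      using dZ[OF x] by (auto intro!: derivative_intros)
    show "- f (- (- Q x)) (- (- Z x)) < - Q' x" using sQ[OF x] by simp
    show "- g (- (- Q x)) < - Z' x" using sZ[OF x] by simp
  next
    fix p a b :: real assume "a \<le> b" then show "- f (- p) (- a) \<le> - f (- p) (- b)" using fmono by auto
  next
    fix a b :: real assume "a \<le> b" then show "- g (- a) \<le> - g (- b)" using gmono by auto
  qed (use cr cV cQ cZ i1 i2 in \<open>auto intro!: continuous_intros\<close>)
  then show ?thesis by auto
qed



definition cl :: "real \<Rightarrow> real \<Rightarrow> real" where "cl B p = max (- B) (min B p)"

definition FF :: "real \<Rightarrow> real \<Rightarrow> real \<Rightarrow> real \<Rightarrow> real \<times> real \<Rightarrow> real \<times> real" where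
  "FF B eps c rK z = (2 / eps * (cl B (snd z) + cl B (fst z) - (cl B (fst z)) ^ 2), c * (cl B (fst z) - rK))"

lemma cl_lip: "\<bar>cl B p - cl B q\<bar> \<le> \<bar>p - q\<bar>"
  by (auto simp: cl_def)

lemma cl_bound: "B \<ge> 0 \<Longrightarrow> \<bar>cl B p\<bar> \<le> B"
  by (auto simp: cl_def)

lemma cl_id: "\<bar>p\<bar> \<le> B \<Longrightarrow> cl B p = p"
  by (auto simp: cl_def)

lemma cl_mono: "p \<le> q \<Longrightarrow> cl B p \<le> cl B q"
  by (auto simp: cl_def)

lemma norm_pair_le: "norm (a :: real, b :: real) \<le> \<bar>a\<bar> + \<bar>b\<bar>"
proof -
  have "norm (a, b) = sqrt (a ^ 2 + b ^ 2)" by (simp add: norm_Pair)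
  also have "\<dots> \<le> sqrt ((\<bar>a\<bar> + \<bar>b\<bar>) ^ 2)"
    by (intro real_sqrt_le_mono) (simp add: power2_eq_square algebra_simps)
  also have "\<dots> = \<bar>a\<bar> + \<bar>b\<bar>" by simp
  finally show ?thesis .
qed

lemma FF_lip:
  assumes B: "B \<ge> 0" and eps: "eps > 0" and c: "c \<ge> 0"
  shows "norm (FF B eps c rK y - FF B eps c rK z) \<le> (2 / eps * (2 + 2 * B) + c) * norm (y - z)"
proof -
  obtain p a where y: "y = (p, a)" by fastforce
  obtain p' a' where z: "z = (p', a')" by fastforce
  have np: "\<bar>p - p'\<bar> \<le> norm (y - z)" by (simp add: y z norm_Pair)
  have na: "\<bar>a - a'\<bar> \<le> norm (y - z)" by (simp add: y z norm_Pair)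
  let ?u = "cl B p" and ?u' = "cl B p'" and ?w = "cl B a" and ?w' = "cl B a'"
  have e1: "\<bar>?u - ?u'\<bar> \<le> \<bar>p - p'\<bar>" "\<bar>?w - ?w'\<bar> \<le> \<bar>a - a'\<bar>" by (rule cl_lip)+
  have s: "\<bar>?u + ?u'\<bar> \<le> 2 * B" using cl_bound[OF B, of p] cl_bound[OF B, of p'] by linarith
  have "\<bar>?u ^ 2 - ?u' ^ 2\<bar> = \<bar>?u + ?u'\<bar> * \<bar>?u - ?u'\<bar>"
    by (simp add: power2_eq_square algebra_simps abs_mult[symmetric])
  also have "\<dots> \<le> (2 * B) * \<bar>p - p'\<bar>" using s e1 by (intro mult_mono) auto
  finally have sq: "\<bar>?u ^ 2 - ?u' ^ 2\<bar> \<le> 2 * B * \<bar>p - p'\<bar>" .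
  have "\<bar>(?w + ?u - ?u ^ 2) - (?w' + ?u' - ?u' ^ 2)\<bar> \<le> \<bar>a - a'\<bar> + \<bar>p - p'\<bar> + 2 * B * \<bar>p - p'\<bar>"
    using e1 sq by linarith
  also have "\<dots> \<le> (2 + 2 * B) * norm (y - z)"
    using np na B by (simp add: algebra_simps) (smt (verit) mult_left_mono)
  finally have c1: "\<bar>(?w + ?u - ?u ^ 2) - (?w' + ?u' - ?u' ^ 2)\<bar> \<le> (2 + 2 * B) * norm (y - z)" .
  have "\<bar>2 / eps * (?w + ?u - ?u ^ 2) - 2 / eps * (?w' + ?u' - ?u' ^ 2)\<bar>
      = 2 / eps * \<bar>(?w + ?u - ?u ^ 2) - (?w' + ?u' - ?u' ^ 2)\<bar>"
  proof -
    have "2 / eps * (?w + ?u - ?u ^ 2) - 2 / eps * (?w' + ?u' - ?u' ^ 2) = 2 / eps * ((?w + ?u - ?u ^ 2) - (?w' + ?u' - ?u' ^ 2))"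
      by (simp only: right_diff_distrib)
    then show ?thesis using eps by (simp only: abs_mult) simp
  qed
  also have "\<dots> \<le> 2 / eps * ((2 + 2 * B) * norm (y - z))" using c1 eps by (intro mult_left_mono) auto
  finally have f1: "\<bar>2 / eps * (?w + ?u - ?u ^ 2) - 2 / eps * (?w' + ?u' - ?u' ^ 2)\<bar> \<le> 2 / eps * (2 + 2 * B) * norm (y - z)"
    by (simp only: mult.assoc)
  have f2: "\<bar>c * (?u - rK) - c * (?u' - rK)\<bar> \<le> c * norm (y - z)"
  proof -
    have "\<bar>c * (?u - rK) - c * (?u' - rK)\<bar> = c * \<bar>?u - ?u'\<bar>" using c by (simp add: right_diff_distrib[symmetric] abs_mult)
    also have "\<dots> \<le> c * norm (y - z)" using e1 np c by (intro mult_left_mono) auto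
    finally show ?thesis .
  qed
  have "norm (FF B eps c rK y - FF B eps c rK z)
      \<le> \<bar>2 / eps * (?w + ?u - ?u ^ 2) - 2 / eps * (?w' + ?u' - ?u' ^ 2)\<bar> + \<bar>c * (?u - rK) - c * (?u' - rK)\<bar>"
    using norm_pair_le by (simp add: FF_def y z)
  also have "\<dots> \<le> (2 / eps * (2 + 2 * B) + c) * norm (y - z)" using f1 f2 by (simp add: algebra_simps)
  finally show ?thesis .
qed

lemma FF_lipF:
  assumes B: "B \<ge> 0" and eps: "eps > 0" and c: "c \<ge> 0"
  shows "lipF (FF B eps c rK) (2 / eps * (2 + 2 * B) + c)"
  by unfold_locales (use FF_lip[OF assms] B eps c in auto)

lemma sol_components:
  assumes "lipF F L" and t: "t \<in> {0..1}"
  shows "((\<lambda>t. fst (sol F y0 t)) has_real_derivative fst (F (sol F y0 t))) (at t within {0..1})"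
    "((\<lambda>t. snd (sol F y0 t)) has_real_derivative snd (F (sol F y0 t))) (at t within {0..1})"
proof -
  interpret lipF F L by fact
  have d: "(sol F y0 has_derivative (\<lambda>h. h *\<^sub>R F (sol F y0 t))) (at t within {0..1})"
    using sol_deriv[OF t] by (simp add: has_vector_derivative_def)
  show "((\<lambda>t. fst (sol F y0 t)) has_real_derivative fst (F (sol F y0 t))) (at t within {0..1})"
    using has_derivative_fst[OF d]
    by (simp add: has_real_derivative_iff_has_vector_derivative has_vector_derivative_def)
  show "((\<lambda>t. snd (sol F y0 t)) has_real_derivative snd (F (sol F y0 t))) (at t within {0..1})"
    using has_derivative_snd[OF d]
    by (simp add: has_real_derivative_iff_has_vector_derivative has_vector_derivative_def)
qed

lemma sol_comp_cont:
  assumes "lipF F L"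
  shows "continuous_on {0..1} (\<lambda>t. fst (sol F y0 t))" "continuous_on {0..1} (\<lambda>t. snd (sol F y0 t))"
proof -
  interpret lipF F L by fact
  show "continuous_on {0..1} (\<lambda>t. fst (sol F y0 t))" "continuous_on {0..1} (\<lambda>t. snd (sol F y0 t))"
    using continuous_on_fst[OF sol_cont[of y0]] continuous_on_snd[OF sol_cont[of y0]] by auto
qed



locale rbset =
  fixes c rK :: real and rb :: "real \<Rightarrow> real"
  assumes c_pos: "c > 0" and rK1: "1/2 < rK" and rK2: "rK < 1"
    and rb_gt: "\<And>x. x \<in> {0..1} \<Longrightarrow> rb x > 1/2"
    and rb_d: "\<And>x. x \<in> {0..1} \<Longrightarrow> (rb has_real_derivative (c * (rb x - rK) / (2 * (rb x - 1/2)))) (at x within {0..1})"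
begin

definition rbd where "rbd x = c * (rb x - rK) / (2 * (rb x - 1/2))"
definition Vb where "Vb x = rb x ^ 2 - rb x"

lemma rb_deriv: "x \<in> {0..1} \<Longrightarrow> (rb has_real_derivative rbd x) (at x within {0..1})"
  using rb_d by (simp add: rbd_def)

lemma rb_cont: "continuous_on {0..1} rb"
  using rb_deriv DERIV_continuous_on by blast

lemma rbd_cont: "continuous_on {0..1} rbd"
  unfolding rbd_def[abs_def]
  by (intro continuous_intros rb_cont) (use rb_gt in force)

lemma Vb_deriv: "x \<in> {0..1} \<Longrightarrow> (Vb has_real_derivative c * (rb x - rK)) (at x within {0..1})"
proof -
  assume x: "x \<in> {0..1}"
  have "(Vb has_real_derivative (2 * rb x - 1) * rbd x) (at x within {0..1})"
    unfolding Vb_def[abs_def] using rb_deriv[OF x]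
    by (auto intro!: derivative_eq_intros simp: algebra_simps)
  moreover have "(2 * rb x - 1) * rbd x = c * (rb x - rK)"
    using rb_gt[OF x] by (simp add: rbd_def field_simps)
  ultimately show ?thesis by simp
qed

lemma Vb_cont: "continuous_on {0..1} Vb"
  unfolding Vb_def[abs_def] by (intro continuous_intros rb_cont)

lemma bounds: "\<exists>m0 Mr M1. m0 > 0 \<and> M1 \<ge> 0 \<and> (\<forall>x\<in>{0..1}. m0 \<le> 2 * rb x - 1 \<and> 2 * rb x - 1 \<le> Mr \<and> \<bar>rbd x\<bar> \<le> M1)"
proof -
  have ne: "{0..1::real} \<noteq> {}" by simp
  have c1: "continuous_on {0..1} (\<lambda>x. 2 * rb x - 1)" by (intro continuous_intros rb_cont)
  have c2: "continuous_on {0..1} (\<lambda>x. \<bar>rbd x\<bar>)" by (intro continuous_intros rbd_cont)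
  obtain a where a: "a \<in> {0..1}" "\<forall>y\<in>{0..1}. 2 * rb a - 1 \<le> 2 * rb y - 1"
    using continuous_attains_inf[OF compact_Icc ne, OF c1] by blast
  obtain b where b: "b \<in> {0..1}" "\<forall>y\<in>{0..1}. 2 * rb y - 1 \<le> 2 * rb b - 1"
    using continuous_attains_sup[OF compact_Icc ne, OF c1] by blast
  obtain d where d: "d \<in> {0..1}" "\<forall>y\<in>{0..1}. \<bar>rbd y\<bar> \<le> \<bar>rbd d\<bar>"
    using continuous_attains_sup[OF compact_Icc ne, OF c2] by blast
  show ?thesis
    apply (rule exI[of _ "2 * rb a - 1"], rule exI[of _ "2 * rb b - 1"], rule exI[of _ "\<bar>rbd d\<bar>"])
    using a b d rb_gt[OF a(1)] by auto
qed

definition fF :: "real \<Rightarrow> real \<Rightarrow> real \<Rightarrow> real" where "fF eps p a = 2 / eps * (a + p - p ^ 2)"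

definition Pb where "Pb eps kap l0 del x = rb x + del x + l0 * exp (- (kap / eps) * x)"
definition Wb where "Wb eps kap l0 gam x = Vb x + gam x + c * l0 * (eps / kap) * (1 - exp (- (kap / eps) * x)) + eps * x"
definition Qb where "Qb eps kap l0 del x = rb x - del x - l0 * exp (- (kap / eps) * x)"
definition Zb where "Zb eps kap l0 gam x = Vb x - gam x - c * l0 * (eps / kap) * (1 - exp (- (kap / eps) * x)) - eps * x"

lemma lam_deriv:
  assumes "eps > 0" "kap > 0"
  shows "((\<lambda>x. c * l0 * (eps / kap) * (1 - exp (- (kap / eps) * x))) has_real_derivative c * l0 * exp (- (kap / eps) * x)) (at x within S)"
proof -
  have "((\<lambda>x. c * l0 * (eps / kap) * (1 - exp (- (kap / eps) * x))) has_real_derivative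
      c * l0 * (eps / kap) * (- (exp (- (kap / eps) * x) * (- (kap / eps))))) (at x within S)"
    by (intro derivative_eq_intros) auto
  moreover have "c * l0 * (eps / kap) * (- (exp (- (kap / eps) * x) * (- (kap / eps)))) = c * l0 * exp (- (kap / eps) * x)"
    using assms by (simp add: field_simps)
  ultimately show ?thesis by simp
qed

lemma exp_deriv:
  "((\<lambda>x. l0 * exp (- (kap / eps) * x)) has_real_derivative - (kap / eps) * (l0 * exp (- (kap / eps) * x))) (at x within S)"
  by (intro derivative_eq_intros) auto

lemma Pb_deriv:
  assumes "eps > 0" "kap > 0" "x \<in> {0..1}" "(del has_real_derivative del' x) (at x within {0..1})"
  shows "(Pb eps kap l0 del has_real_derivative rbd x + del' x - (kap / eps) * (l0 * exp (- (kap / eps) * x))) (at x within {0..1})"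
  unfolding Pb_def[abs_def]
  using DERIV_add[OF DERIV_add[OF rb_deriv[OF assms(3)] assms(4)] exp_deriv] by simp

lemma Qb_deriv:
  assumes "eps > 0" "kap > 0" "x \<in> {0..1}" "(del has_real_derivative del' x) (at x within {0..1})"
  shows "(Qb eps kap l0 del has_real_derivative rbd x - del' x + (kap / eps) * (l0 * exp (- (kap / eps) * x))) (at x within {0..1})"
  unfolding Qb_def[abs_def]
  using DERIV_diff[OF DERIV_diff[OF rb_deriv[OF assms(3)] assms(4)] exp_deriv] by simp

lemma Wb_deriv:
  assumes "eps > 0" "kap > 0" "x \<in> {0..1}" "(gam has_real_derivative gam' x) (at x within {0..1})"
  shows "(Wb eps kap l0 gam has_real_derivative c * (rb x - rK) + gam' x + c * l0 * exp (- (kap / eps) * x) + eps) (at x within {0..1})"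
proof -
  have "((\<lambda>x. eps * x) has_real_derivative eps) (at x within {0..1})"
    by (intro derivative_eq_intros) auto
  then show ?thesis
    unfolding Wb_def[abs_def]
    using DERIV_add[OF DERIV_add[OF DERIV_add[OF Vb_deriv[OF assms(3)] assms(4)] lam_deriv[OF assms(1,2)]]] by simp
qed

lemma Zb_deriv:
  assumes "eps > 0" "kap > 0" "x \<in> {0..1}" "(gam has_real_derivative gam' x) (at x within {0..1})"
  shows "(Zb eps kap l0 gam has_real_derivative c * (rb x - rK) - gam' x - c * l0 * exp (- (kap / eps) * x) - eps) (at x within {0..1})"
proof -
  have "((\<lambda>x. eps * x) has_real_derivative eps) (at x within {0..1})"
    by (intro derivative_eq_intros) auto
  then show ?thesis
    unfolding Zb_def[abs_def]
    using DERIV_diff[OF DERIV_diff[OF DERIV_diff[OF Vb_deriv[OF assms(3)] assms(4)] lam_deriv[OF assms(1,2)]]] by simp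
qed

lemma lam_bounds:
  assumes "eps > 0" "kap > 0" "l0 \<ge> 0" "x \<ge> 0"
  shows "0 \<le> c * l0 * (eps / kap) * (1 - exp (- (kap / eps) * x))"
    "c * l0 * (eps / kap) * (1 - exp (- (kap / eps) * x)) \<le> c * l0 * eps / kap"
proof -
  have e: "exp (- (kap / eps) * x) \<le> 1" using assms by simp
  have cl: "c * l0 * (eps / kap) \<ge> 0" using assms c_pos by simp
  show "0 \<le> c * l0 * (eps / kap) * (1 - exp (- (kap / eps) * x))" using e cl assms c_pos by (intro mult_nonneg_nonneg) auto
  have "c * l0 * (eps / kap) * (1 - exp (- (kap / eps) * x)) \<le> c * l0 * (eps / kap) * 1"
    using cl by (intro mult_left_mono) auto
  then show "c * l0 * (eps / kap) * (1 - exp (- (kap / eps) * x)) \<le> c * l0 * eps / kap" by simp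
qed

lemma upper_ineq:
  assumes eps: "eps > 0" and kap: "kap > 0" and l0: "l0 \<ge> 0" and mu: "mu > 0" and x: "x \<in> {0..1}"
    and a: "gam' x \<ge> c * del x"
    and b: "gam x - (2 * rb x - 1) * del x \<le> - mu"
    and m0: "m0 \<le> 2 * rb x - 1" "kap \<le> 2 * m0"
    and Mb: "\<bar>rbd x + del' x\<bar> \<le> Mb"
    and e1: "eps + c * l0 * eps / kap \<le> mu / 2"
    and e2: "eps * Mb < mu"
  shows "rbd x + del' x - (kap / eps) * (l0 * exp (- (kap / eps) * x)) > fF eps (Pb eps kap l0 del x) (Wb eps kap l0 gam x)"
    and "c * (rb x - rK) + gam' x + c * l0 * exp (- (kap / eps) * x) + eps > c * (Pb eps kap l0 del x - rK)"
proof -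
  define E where "E = exp (- (kap / eps) * x)"
  define l where "l = l0 * E"
  define lam where "lam = c * l0 * (eps / kap) * (1 - E)"
  have l_ge: "l \<ge> 0" using l0 by (simp add: l_def E_def)
  have lam_le: "lam \<le> c * l0 * eps / kap" using lam_bounds[OF eps kap l0, of x] x by (simp add: lam_def E_def)
  have P: "Pb eps kap l0 del x = rb x + (del x + l)" by (simp add: Pb_def l_def E_def)
  have W: "Wb eps kap l0 gam x = Vb x + gam x + lam + eps * x" by (simp add: Wb_def lam_def E_def)
  have id: "Wb eps kap l0 gam x + Pb eps kap l0 del x - (Pb eps kap l0 del x) ^ 2
      = gam x + lam + eps * x - (2 * rb x - 1) * del x - (2 * rb x - 1) * l - (del x + l) ^ 2"
    unfolding P W Vb_def by (simp add: power2_eq_square algebra_simps)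
  have "eps * x \<le> eps" using x eps by (simp add: mult_left_le)
  moreover have "(2 * rb x - 1) * l \<ge> m0 * l" using m0 l_ge by (intro mult_right_mono) auto
  moreover have "(del x + l) ^ 2 \<ge> 0" by simp
  ultimately have S: "Wb eps kap l0 gam x + Pb eps kap l0 del x - (Pb eps kap l0 del x) ^ 2 \<le> - mu / 2 - m0 * l"
    unfolding id using b e1 lam_le by linarith
  have "fF eps (Pb eps kap l0 del x) (Wb eps kap l0 gam x) \<le> 2 / eps * (- mu / 2 - m0 * l)"
    unfolding fF_def using S eps by (intro mult_left_mono) auto
  also have "\<dots> = - (mu / eps) - (2 * m0 / eps) * l" using eps by (simp add: field_simps)
  also have "\<dots> < - Mb - (kap / eps) * l"
  proof -
    have "Mb < mu / eps" using e2 eps by (simp add: field_simps)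
    moreover have "(kap / eps) * l \<le> (2 * m0 / eps) * l"
      using m0 l_ge eps by (intro mult_right_mono divide_right_mono) auto
    ultimately show ?thesis by linarith
  qed
  also have "\<dots> \<le> rbd x + del' x - (kap / eps) * (l0 * exp (- (kap / eps) * x))"
    using Mb by (simp add: l_def E_def abs_le_iff)
  finally show "rbd x + del' x - (kap / eps) * (l0 * exp (- (kap / eps) * x)) > fF eps (Pb eps kap l0 del x) (Wb eps kap l0 gam x)" .
  show "c * (rb x - rK) + gam' x + c * l0 * exp (- (kap / eps) * x) + eps > c * (Pb eps kap l0 del x - rK)"
    using a eps unfolding P by (simp add: l_def E_def algebra_simps)
qed

lemma lower_ineq:
  assumes eps: "eps > 0" and kap: "kap > 0" and l0: "l0 \<ge> 0" and mu: "mu > 0" and x: "x \<in> {0..1}"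
    and a: "gam' x \<ge> c * del x"
    and b: "(2 * rb x - 1) * del x - (del x) ^ 2 - gam x \<ge> mu"
    and m: "m > 0" "kap \<le> 2 * m" "l0 * exp (- (kap / eps) * x) \<le> 2 * rb x - 1 - 2 * del x - m"
    and Mb: "\<bar>rbd x - del' x\<bar> \<le> Mb"
    and e1: "eps + c * l0 * eps / kap \<le> mu / 2"
    and e2: "eps * Mb < mu"
  shows "rbd x - del' x + (kap / eps) * (l0 * exp (- (kap / eps) * x)) < fF eps (Qb eps kap l0 del x) (Zb eps kap l0 gam x)"
    and "c * (rb x - rK) - gam' x - c * l0 * exp (- (kap / eps) * x) - eps < c * (Qb eps kap l0 del x - rK)"
proof -
  define E where "E = exp (- (kap / eps) * x)"
  define l where "l = l0 * E"
  define lam where "lam = c * l0 * (eps / kap) * (1 - E)"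
  have l_ge: "l \<ge> 0" using l0 by (simp add: l_def E_def)
  have lam_le: "lam \<le> c * l0 * eps / kap" using lam_bounds[OF eps kap l0, of x] x by (simp add: lam_def E_def)
  have Q: "Qb eps kap l0 del x = rb x - (del x + l)" by (simp add: Qb_def l_def E_def)
  have Z: "Zb eps kap l0 gam x = Vb x - gam x - lam - eps * x" by (simp add: Zb_def lam_def E_def)
  have id: "Zb eps kap l0 gam x + Qb eps kap l0 del x - (Qb eps kap l0 del x) ^ 2
      = ((2 * rb x - 1) * del x - (del x) ^ 2 - gam x) + l * (2 * rb x - 1 - 2 * del x - l) - lam - eps * x"
    unfolding Q Z Vb_def by (simp add: power2_eq_square algebra_simps)
  have lm: "l * m = m * l" by simp
  have "eps * x \<le> eps" using x eps by (simp add: mult_left_le)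
  moreover have "l * (2 * rb x - 1 - 2 * del x - l) \<ge> l * m"
    using m(3) l_ge by (intro mult_left_mono) (auto simp: l_def E_def)
  ultimately have S: "Zb eps kap l0 gam x + Qb eps kap l0 del x - (Qb eps kap l0 del x) ^ 2 \<ge> mu / 2 + m * l"
    unfolding id using b e1 lam_le lm by linarith
  have "rbd x - del' x + (kap / eps) * (l0 * exp (- (kap / eps) * x)) \<le> Mb + (kap / eps) * l"
    using Mb by (simp add: l_def E_def abs_le_iff)
  also have "\<dots> < mu / eps + (2 * m / eps) * l"
  proof -
    have "Mb < mu / eps" using e2 eps by (simp add: field_simps)
    moreover have "(kap / eps) * l \<le> (2 * m / eps) * l"
      using m l_ge eps by (intro mult_right_mono divide_right_mono) auto
    ultimately show ?thesis by linarith
  qed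
  also have "\<dots> = 2 / eps * (mu / 2 + m * l)" using eps by (simp add: field_simps)
  also have "\<dots> \<le> fF eps (Qb eps kap l0 del x) (Zb eps kap l0 gam x)"
    unfolding fF_def using S eps by (intro mult_left_mono) auto
  finally show "rbd x - del' x + (kap / eps) * (l0 * exp (- (kap / eps) * x)) < fF eps (Qb eps kap l0 del x) (Zb eps kap l0 gam x)" .
  show "c * (rb x - rK) - gam' x - c * l0 * exp (- (kap / eps) * x) - eps < c * (Qb eps kap l0 del x - rK)"
    using a eps unfolding Q by (simp add: l_def E_def algebra_simps)
qed

end


locale mainset = rbset c rK rb for c rK :: real and rb :: "real \<Rightarrow> real" +
  fixes alpha m0 Mr M1 :: real
  assumes m0_pos: "m0 > 0" and M1_nn: "M1 \<ge> 0"
    and bnds: "\<And>x. x \<in> {0..1} \<Longrightarrow> m0 \<le> 2 * rb x - 1 \<and> 2 * rb x - 1 \<le> Mr \<and> \<bar>rbd x\<bar> \<le> M1"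
    and alpha_gt: "alpha > 1 - rb 0"
begin

definition "sg = alpha - (1 - rb 0)"
definition "A = 2 / m0"
definition "Lg = c * A"
definition "B = 1 / (2 * Mr)"
definition "D0 = min (sg / 12) (m0 / 8)"
definition "kap = min sg m0 / 4"
definition "gmax = min (min (D0 / (A * exp Lg)) (1 / (2 * A ^ 2 * exp Lg))) (min (D0 / B) (1 / (4 * B ^ 2)))"
definition "Lmax = \<bar>rb 0\<bar> + D0 + \<bar>alpha\<bar> + 1"
definition "Rb = (Mr + 1) / 2"
definition "Mb = M1 + A * Lg * gmax * exp Lg"
definition "B0 = Rb + D0 + Lmax + (Rb ^ 2 + Rb) + gmax * exp Lg + c * Lmax / kap + 1"
definition "x1 = sg / (8 * (M1 + 1))"

definition "Y eps v = sol (FF B0 eps c rK) (alpha, v)"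
definition "rh eps v x = fst (Y eps v x)"
definition "Vh eps v x = snd (Y eps v x)"

definition "l0u eps d0 = max 0 (alpha - rb 0 - d0) + eps"
definition "l0l eps d0 = max 0 (rb 0 - d0 - alpha) + eps"

lemma z01: "(0::real) \<in> {0..1}" "(1::real) \<in> {0..1}" by auto

lemma Mr_ge: "Mr \<ge> m0" using bnds[OF z01(1)] by auto
lemma sg_pos: "sg > 0" using alpha_gt by (simp add: sg_def)
lemma A_pos: "A > 0" using m0_pos by (simp add: A_def)
lemma Lg_pos: "Lg > 0" using c_pos A_pos by (simp add: Lg_def)
lemma B_pos: "B > 0" using Mr_ge m0_pos by (simp add: B_def)
lemma D0_pos: "D0 > 0" using sg_pos m0_pos by (simp add: D0_def)
lemma kap_pos: "kap > 0" using sg_pos m0_pos by (simp add: kap_def)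
lemma gmax_pos: "gmax > 0" using D0_pos A_pos B_pos by (simp add: gmax_def)
lemma Lmax_ge1: "Lmax \<ge> 1" using D0_pos by (simp add: Lmax_def)
lemma x1_pos: "x1 > 0" using sg_pos M1_nn by (simp add: x1_def)

lemma rb_bd: "x \<in> {0..1} \<Longrightarrow> 1/2 < rb x \<and> rb x \<le> Rb"
  using rb_gt[of x] bnds[of x] by (auto simp: Rb_def)

lemma rb_abs: "x \<in> {0..1} \<Longrightarrow> \<bar>rb x\<bar> \<le> Rb"
  using rb_bd[of x] by auto

lemma Vb_abs: "x \<in> {0..1} \<Longrightarrow> \<bar>Vb x\<bar> \<le> Rb ^ 2 + Rb"
proof -
  assume x: "x \<in> {0..1}"
  have "\<bar>Vb x\<bar> \<le> \<bar>rb x ^ 2\<bar> + \<bar>rb x\<bar>" unfolding Vb_def by (rule abs_triangle_ineq4)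
  also have "\<dots> = \<bar>rb x\<bar> ^ 2 + \<bar>rb x\<bar>" by (simp add: power_abs)
  also have "\<dots> \<le> Rb ^ 2 + Rb" using rb_abs[OF x] by (intro add_mono power_mono) auto
  finally show ?thesis .
qed

lemma rb_lip: "x \<in> {0..1} \<Longrightarrow> \<bar>rb x - rb 0\<bar> \<le> M1 * x"
proof -
  assume x: "x \<in> {0..1}"
  have "norm (rb x - rb 0) \<le> M1 * norm (x - 0)"
  proof (rule field_differentiable_bound[where f'=rbd and S="{0..1}"])
    show "convex {0..1::real}" by simp
    fix z :: real assume z: "z \<in> {0..1}"
    show "(rb has_field_derivative rbd z) (at z within {0..1})" by (rule rb_deriv[OF z])
    show "norm (rbd z) \<le> M1" using bnds[OF z] by simp
  qed (use x in auto)
  then show ?thesis using x by simp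
qed

lemma gmax_props:
  "A * gmax * exp Lg \<le> D0" "A ^ 2 * gmax * exp Lg \<le> 1/2" "B * gmax \<le> D0" "B ^ 2 * gmax \<le> 1/4"
proof -
  have e: "exp Lg > 0" by simp
  have "gmax \<le> D0 / (A * exp Lg)" by (simp add: gmax_def)
  then show "A * gmax * exp Lg \<le> D0" using A_pos e by (simp add: field_simps)
  have "gmax \<le> 1 / (2 * A ^ 2 * exp Lg)" by (simp add: gmax_def)
  then show "A ^ 2 * gmax * exp Lg \<le> 1/2" using A_pos e by (simp add: field_simps)
  have "gmax \<le> D0 / B" by (simp add: gmax_def)
  then show "B * gmax \<le> D0" using B_pos by (simp add: field_simps)
  have "gmax \<le> 1 / (4 * B ^ 2)" by (simp add: gmax_def)
  then show "B ^ 2 * gmax \<le> 1/4" using B_pos by (simp add: field_simps)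
qed

lemma B0_pos: "B0 \<ge> 0"
proof -
  have "Rb \<ge> 0" using rb_bd[OF z01(1)] by auto
  then show ?thesis using D0_pos Lmax_ge1 gmax_pos c_pos kap_pos by (simp add: B0_def)
qed

lemma lipY: "eps > 0 \<Longrightarrow> lipF (FF B0 eps c rK) (2 / eps * (2 + 2 * B0) + c)"
  using FF_lipF[OF B0_pos] c_pos by auto

lemma rh_cont: "eps > 0 \<Longrightarrow> continuous_on {0..1} (rh eps v)"
  using sol_comp_cont(1)[OF lipY] by (simp add: rh_def[abs_def] Y_def)

lemma Vh_cont: "eps > 0 \<Longrightarrow> continuous_on {0..1} (Vh eps v)"
  using sol_comp_cont(2)[OF lipY] by (simp add: Vh_def[abs_def] Y_def)

lemma rh_deriv: "eps > 0 \<Longrightarrow> x \<in> {0..1} \<Longrightarrow>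
  (rh eps v has_real_derivative fF eps (cl B0 (rh eps v x)) (cl B0 (Vh eps v x))) (at x within {0..1})"
  using sol_components(1)[OF lipY] by (simp add: rh_def[abs_def] Vh_def Y_def FF_def fF_def)

lemma Vh_deriv: "eps > 0 \<Longrightarrow> x \<in> {0..1} \<Longrightarrow>
  (Vh eps v has_real_derivative c * (cl B0 (rh eps v x) - rK)) (at x within {0..1})"
  using sol_components(2)[OF lipY] by (simp add: rh_def Vh_def[abs_def] Y_def FF_def)

lemma rh_0: "eps > 0 \<Longrightarrow> rh eps v 0 = alpha" "eps > 0 \<Longrightarrow> Vh eps v 0 = v"
proof -
  assume "eps > 0"
  then interpret lipF "FF B0 eps c rK" "2 / eps * (2 + 2 * B0) + c" by (rule lipY)
  show "rh eps v 0 = alpha" "Vh eps v 0 = v" by (simp_all add: rh_def Vh_def Y_def sol_0)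
qed

lemma rh_dep: "eps > 0 \<Longrightarrow> x \<in> {0..1} \<Longrightarrow> \<bar>rh eps v x - rh eps w x\<bar> \<le> \<bar>v - w\<bar> * exp (2 / eps * (2 + 2 * B0) + c)"
proof -
  assume "eps > 0" "x \<in> {0..1}"
  then interpret lipF "FF B0 eps c rK" "2 / eps * (2 + 2 * B0) + c" by (intro lipY)
  have h2: "norm (Y eps v x - Y eps w x) \<le> norm ((alpha, v) - (alpha, w)) * exp (2 / eps * (2 + 2 * B0) + c)"
    unfolding Y_def by (rule sol_dep) fact
  have h1: "\<bar>rh eps v x - rh eps w x\<bar> \<le> norm (Y eps v x - Y eps w x)"
  proof -
    have fz: "\<bar>fst z\<bar> \<le> norm z" for z :: "real \<times> real" by (cases z) (simp add: norm_Pair)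
    show ?thesis using fz[of "Y eps v x - Y eps w x"] by (simp add: rh_def)
  qed
  have h3: "norm ((alpha, v) - (alpha, w)) = \<bar>v - w\<bar>" by (simp add: norm_Pair)
  show ?thesis using h1 h2 unfolding h3 by linarith
qed

end


lemma exp_neg_le: "(t::real) > 0 \<Longrightarrow> exp (- t) \<le> 1 / t"
proof -
  assume t: "t > 0"
  have "t \<le> exp t" using exp_ge_add_one_self[of t] by linarith
  then have "1 / exp t \<le> 1 / t" using t by (intro divide_left_mono) auto
  then show ?thesis by (simp add: exp_minus field_simps)
qed

context mainset begin

lemma kap_le: "kap \<le> sg / 4" "kap \<le> m0 / 4" by (auto simp: kap_def)
lemma D0_le: "D0 \<le> sg / 12" "D0 \<le> m0 / 8" by (auto simp: D0_def)

lemma l0u_bd: "0 < eps \<Longrightarrow> eps \<le> 1 \<Longrightarrow> \<bar>d0\<bar> \<le> D0 \<Longrightarrow> 0 \<le> l0u eps d0 \<and> l0u eps d0 \<le> Lmax"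
  by (auto simp: l0u_def Lmax_def)

lemma l0l_bd: "0 < eps \<Longrightarrow> eps \<le> 1 \<Longrightarrow> \<bar>d0\<bar> \<le> D0 \<Longrightarrow> 0 \<le> l0l eps d0 \<and> l0l eps d0 \<le> Lmax"
  by (auto simp: l0l_def Lmax_def)

lemma expE: "0 < (eps::real) \<Longrightarrow> x \<ge> 0 \<Longrightarrow> 0 < exp (- (k / eps) * x) \<and> (k \<ge> 0 \<longrightarrow> exp (- (k / eps) * x) \<le> 1)"
  by auto

lemma box_P:
  assumes eps: "0 < eps" "eps \<le> 1" and x: "x \<in> {0..1}" and d: "\<bar>del x\<bar> \<le> D0" and l: "0 \<le> l0" "l0 \<le> Lmax"
  shows "\<bar>Pb eps kap l0 del x\<bar> \<le> B0" "\<bar>Qb eps kap l0 del x\<bar> \<le> B0"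
proof -
  have E: "l0 * exp (- (kap / eps) * x) \<le> Lmax" "0 \<le> l0 * exp (- (kap / eps) * x)"
    using expE[OF eps(1), of x kap] x kap_pos l by (auto intro: mult_le_one order_trans[OF mult_right_le_one_le])
  have "Rb \<ge> 0" using rb_bd[OF z01(1)] by auto
  then have "Rb + D0 + Lmax \<le> B0" using Lmax_ge1 gmax_pos c_pos kap_pos by (simp add: B0_def)
  then show "\<bar>Pb eps kap l0 del x\<bar> \<le> B0" "\<bar>Qb eps kap l0 del x\<bar> \<le> B0"
    using rb_abs[OF x] d E by (auto simp: Pb_def Qb_def)
qed

lemma box_W:
  assumes eps: "0 < eps" "eps \<le> 1" and x: "x \<in> {0..1}" and g: "\<bar>gam x\<bar> \<le> gmax * exp Lg" and l: "0 \<le> l0" "l0 \<le> Lmax"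
  shows "\<bar>Wb eps kap l0 gam x\<bar> \<le> B0" "\<bar>Zb eps kap l0 gam x\<bar> \<le> B0"
proof -
  have lb: "0 \<le> c * l0 * (eps / kap) * (1 - exp (- (kap / eps) * x))"
    "c * l0 * (eps / kap) * (1 - exp (- (kap / eps) * x)) \<le> c * l0 * eps / kap"
    using lam_bounds[OF eps(1) kap_pos l(1), of x] x by auto
  have "c * l0 * eps / kap \<le> c * Lmax / kap"
  proof -
    have "l0 * eps \<le> Lmax * 1" using l eps by (intro mult_mono) auto
    then show ?thesis using c_pos kap_pos by (simp add: divide_right_mono mult_left_mono mult.assoc)
  qed
  moreover have "eps * x \<le> 1" "0 \<le> eps * x" using eps x by (auto intro: mult_le_one)
  moreover have "\<bar>Vb x\<bar> \<le> Rb ^ 2 + Rb" by (rule Vb_abs[OF x])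
  moreover have "Rb \<ge> 0" using rb_bd[OF z01(1)] by auto
  ultimately show "\<bar>Wb eps kap l0 gam x\<bar> \<le> B0" "\<bar>Zb eps kap l0 gam x\<bar> \<le> B0"
    using g lb D0_pos Lmax_ge1 unfolding Wb_def Zb_def B0_def by linarith+
qed

end


context mainset begin

lemma fmono: "0 < eps \<Longrightarrow> a \<le> b \<Longrightarrow> fF eps (cl B0 p) (cl B0 a) \<le> fF eps (cl B0 p) (cl B0 b)"
  unfolding fF_def using cl_mono[of a b B0] by (intro mult_left_mono) auto

lemma gmono: "a \<le> b \<Longrightarrow> c * (cl B0 a - rK) \<le> c * (cl B0 b - rK)"
  using cl_mono[of a b B0] c_pos by (intro mult_left_mono) auto

lemma up_cmp:
  fixes gam del gam' del' :: "real \<Rightarrow> real"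
  assumes eps: "0 < eps" "eps \<le> 1" and mu: "mu > 0"
    and dg: "\<And>x. x \<in> {0..1} \<Longrightarrow> (gam has_real_derivative gam' x) (at x within {0..1})"
    and dd: "\<And>x. x \<in> {0..1} \<Longrightarrow> (del has_real_derivative del' x) (at x within {0..1})"
    and bd: "\<And>x. x \<in> {0..1} \<Longrightarrow> \<bar>del x\<bar> \<le> D0 \<and> \<bar>gam x\<bar> \<le> gmax * exp Lg \<and> \<bar>del' x\<bar> \<le> A * Lg * gmax * exp Lg"
    and a: "\<And>x. x \<in> {0..1} \<Longrightarrow> gam' x \<ge> c * del x"
    and b: "\<And>x. x \<in> {0..1} \<Longrightarrow> gam x - (2 * rb x - 1) * del x \<le> - mu"
    and e1: "eps + c * Lmax * eps / kap \<le> mu / 2" and e2: "eps * Mb < mu"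
    and v: "v < Vb 0 + gam 0"
  shows "\<forall>x\<in>{0..1}. rh eps v x < Pb eps kap (l0u eps (del 0)) del x \<and> Vh eps v x < Wb eps kap (l0u eps (del 0)) gam x"
proof -
  define l0 where "l0 = l0u eps (del 0)"
  have l0b: "0 \<le> l0" "l0 \<le> Lmax" using l0u_bd[OF eps] bd[OF z01(1)] by (auto simp: l0_def)
  have dP: "(Pb eps kap l0 del has_real_derivative rbd x + del' x - (kap / eps) * (l0 * exp (- (kap / eps) * x))) (at x within {0..1})"
    if "x \<in> {0..1}" for x using Pb_deriv[where del=del and del'=del', OF eps(1) kap_pos that dd[OF that]] .
  have dW: "(Wb eps kap l0 gam has_real_derivative c * (rb x - rK) + gam' x + c * l0 * exp (- (kap / eps) * x) + eps) (at x within {0..1})"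
    if "x \<in> {0..1}" for x using Wb_deriv[where gam=gam and gam'=gam', OF eps(1) kap_pos that dg[OF that]] .
  have e1': "eps + c * l0 * eps / kap \<le> mu / 2"
  proof -
    have "c * l0 * eps / kap \<le> c * Lmax * eps / kap"
      using l0b c_pos eps kap_pos by (intro divide_right_mono mult_right_mono mult_left_mono) auto
    then show ?thesis using e1 by linarith
  qed
  have "\<forall>x\<in>{0..1}. rh eps v x < Pb eps kap l0 del x \<and> Vh eps v x < Wb eps kap l0 gam x"
  proof (rule compare_upper[where f="\<lambda>p a. fF eps (cl B0 p) (cl B0 a)" and g="\<lambda>p. c * (cl B0 p - rK)"])
    show "continuous_on {0..1} (rh eps v)" by (rule rh_cont[OF eps(1)])
    show "continuous_on {0..1} (Vh eps v)" by (rule Vh_cont[OF eps(1)])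
    show "continuous_on {0..1} (Pb eps kap l0 del)" by (rule DERIV_continuous_on, rule dP)
    show "continuous_on {0..1} (Wb eps kap l0 gam)" by (rule DERIV_continuous_on, rule dW)
    fix x :: real assume x: "x \<in> {0..1}"
    show "(rh eps v has_real_derivative fF eps (cl B0 (rh eps v x)) (cl B0 (Vh eps v x))) (at x within {0..1})"
      by (rule rh_deriv[OF eps(1) x])
    show "(Vh eps v has_real_derivative c * (cl B0 (rh eps v x) - rK)) (at x within {0..1})"
      by (rule Vh_deriv[OF eps(1) x])
    show "(Pb eps kap l0 del has_real_derivative rbd x + del' x - (kap / eps) * (l0 * exp (- (kap / eps) * x))) (at x within {0..1})"
      by (rule dP[OF x])
    show "(Wb eps kap l0 gam has_real_derivative c * (rb x - rK) + gam' x + c * l0 * exp (- (kap / eps) * x) + eps) (at x within {0..1})"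
      by (rule dW[OF x])
    have clP: "cl B0 (Pb eps kap l0 del x) = Pb eps kap l0 del x"
      using box_P(1)[OF eps x _ l0b] bd[OF x] by (intro cl_id) auto
    have clW: "cl B0 (Wb eps kap l0 gam x) = Wb eps kap l0 gam x"
      using box_W(1)[OF eps x _ l0b] bd[OF x] by (intro cl_id) auto
    have Mbx: "\<bar>rbd x + del' x\<bar> \<le> Mb"
    proof -
      have "\<bar>rbd x\<bar> \<le> M1" "\<bar>del' x\<bar> \<le> A * Lg * gmax * exp Lg" using bnds[OF x] bd[OF x] by auto
      then show ?thesis unfolding Mb_def by linarith
    qed
    have kk: "kap \<le> 2 * m0" using kap_le m0_pos by linarith
    have m0x: "m0 \<le> 2 * rb x - 1" using bnds[OF x] by blast
    note ui = upper_ineq[where gam=gam and del=del and gam'=gam' and del'=del',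
        OF eps(1) kap_pos l0b(1) mu x a[OF x] b[OF x] m0x kk Mbx e1' e2]
    show "fF eps (cl B0 (Pb eps kap l0 del x)) (cl B0 (Wb eps kap l0 gam x))
        < rbd x + del' x - kap / eps * (l0 * exp (- (kap / eps) * x))"
      unfolding clP clW using ui(1) by blast
    show "c * (cl B0 (Pb eps kap l0 del x) - rK) < c * (rb x - rK) + gam' x + c * l0 * exp (- (kap / eps) * x) + eps"
      unfolding clP using ui(2) by blast
  next
    fix p a b :: real assume "a \<le> b" then show "fF eps (cl B0 p) (cl B0 a) \<le> fF eps (cl B0 p) (cl B0 b)"
      by (rule fmono[OF eps(1)])
  next
    fix a b :: real assume "a \<le> b" then show "c * (cl B0 a - rK) \<le> c * (cl B0 b - rK)" by (rule gmono)
  next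
    show "rh eps v 0 < Pb eps kap l0 del 0" using rh_0[OF eps(1)] eps by (simp add: Pb_def l0_def l0u_def)
    show "Vh eps v 0 < Wb eps kap l0 gam 0" using rh_0[OF eps(1)] v by (simp add: Wb_def)
  qed
  then show ?thesis by (simp add: l0_def)
qed

end


context mainset begin

lemma lconstr:
  assumes eps: "0 < eps" "eps \<le> 1" "eps \<le> sg / 4" "eps \<le> m0 / 2" "Lmax * eps / (kap * x1) \<le> m0 / 4"
    and bd: "\<And>x. x \<in> {0..1} \<Longrightarrow> \<bar>del x\<bar> \<le> D0"
    and x: "x \<in> {0..1}"
  shows "l0l eps (del 0) * exp (- (kap / eps) * x) \<le> 2 * rb x - 1 - 2 * del x - kap"
proof -
  define E where "E = exp (- (kap / eps) * x)"
  have E: "0 < E" "E \<le> 1" using x kap_pos eps by (auto simp: E_def)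
  have l0b: "0 \<le> l0l eps (del 0)" "l0l eps (del 0) \<le> Lmax" using l0l_bd[OF eps(1,2) bd[OF z01(1)]] by auto
  have dx: "\<bar>del x\<bar> \<le> D0" "\<bar>del 0\<bar> \<le> D0" using bd x by auto
  have m0x: "m0 \<le> 2 * rb x - 1" using bnds[OF x] by blast
  have kl: "kap \<le> sg / 4" "kap \<le> m0 / 4" by (rule kap_le)+
  have Dl: "D0 \<le> sg / 12" "D0 \<le> m0 / 8" by (rule D0_le)+
  have R1: "2 * rb x - 1 - 2 * del x - kap \<ge> m0 / 2" using m0x dx kl Dl by linarith
  have main: "l0l eps (del 0) * E \<le> 2 * rb x - 1 - 2 * del x - kap"
  proof (cases "rb 0 - del 0 - alpha \<le> 0")
    case True
    then have "l0l eps (del 0) = eps" by (simp add: l0l_def)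
    then have "l0l eps (del 0) * E \<le> eps" using E eps by (simp add: mult_left_le)
    then show ?thesis using R1 eps by linarith
  next
    case False
    then have l0: "l0l eps (del 0) = rb 0 - del 0 - alpha + eps" by (simp add: l0l_def)
    show ?thesis
    proof (cases "x \<le> x1")
      case True
      have "l0l eps (del 0) * E \<le> l0l eps (del 0)" using E l0b by (simp add: mult_left_le)
      moreover have "\<bar>rb x - rb 0\<bar> \<le> M1 * x" by (rule rb_lip[OF x])
      moreover have "M1 * x \<le> M1 * x1" using True M1_nn by (intro mult_left_mono) auto
      moreover have "2 * (M1 * x1) \<le> sg / 4"
      proof -
        have "M1 + 1 > 0" using M1_nn by simp
        then have "2 * (M1 * x1) = sg * (M1 / (4 * (M1 + 1)))" by (simp add: x1_def field_simps)
        also have "\<dots> \<le> sg * (1 / 4)" using sg_pos M1_nn by (intro mult_left_mono) (auto simp: field_simps)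
        finally show ?thesis by simp
      qed
      moreover have "alpha = 1 - rb 0 + sg" by (simp add: sg_def)
      ultimately show ?thesis using l0 dx kl Dl eps by linarith
    next
      case False
      have "kap / eps * x1 \<le> kap / eps * x" using False kap_pos eps by (intro mult_left_mono) auto
      then have "E \<le> exp (- (kap / eps * x1))" by (simp add: E_def)
      also have "\<dots> \<le> 1 / (kap / eps * x1)" using kap_pos eps x1_pos by (intro exp_neg_le) auto
      also have "\<dots> = eps / (kap * x1)" by simp
      finally have E2: "E \<le> eps / (kap * x1)" .
      have "l0l eps (del 0) * E \<le> Lmax * (eps / (kap * x1))"
        using E2 l0b E by (intro mult_mono) auto
      also have "\<dots> = Lmax * eps / (kap * x1)" by simp
      finally show ?thesis using eps R1 kl m0_pos by linarith
    qed
  qed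
  then show ?thesis by (simp add: E_def)
qed

lemma lo_cmp:
  fixes gam del gam' del' :: "real \<Rightarrow> real"
  assumes eps: "0 < eps" "eps \<le> 1" "eps \<le> sg / 4" "eps \<le> m0 / 2" "Lmax * eps / (kap * x1) \<le> m0 / 4"
    and mu: "mu > 0"
    and dg: "\<And>x. x \<in> {0..1} \<Longrightarrow> (gam has_real_derivative gam' x) (at x within {0..1})"
    and dd: "\<And>x. x \<in> {0..1} \<Longrightarrow> (del has_real_derivative del' x) (at x within {0..1})"
    and bd: "\<And>x. x \<in> {0..1} \<Longrightarrow> \<bar>del x\<bar> \<le> D0 \<and> \<bar>gam x\<bar> \<le> gmax * exp Lg \<and> \<bar>del' x\<bar> \<le> A * Lg * gmax * exp Lg"
    and a: "\<And>x. x \<in> {0..1} \<Longrightarrow> gam' x \<ge> c * del x"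
    and b: "\<And>x. x \<in> {0..1} \<Longrightarrow> (2 * rb x - 1) * del x - (del x)^2 - gam x \<ge> mu"
    and e1: "eps + c * Lmax * eps / kap \<le> mu / 2" and e2: "eps * Mb < mu"
    and v: "v > Vb 0 - gam 0"
  shows "\<forall>x\<in>{0..1}. Qb eps kap (l0l eps (del 0)) del x < rh eps v x \<and> Zb eps kap (l0l eps (del 0)) gam x < Vh eps v x"
proof -
  define l0 where "l0 = l0l eps (del 0)"
  have l0b: "0 \<le> l0" "l0 \<le> Lmax" using l0l_bd[OF eps(1,2)] bd[OF z01(1)] by (auto simp: l0_def)
  have dQ: "(Qb eps kap l0 del has_real_derivative rbd x - del' x + (kap / eps) * (l0 * exp (- (kap / eps) * x))) (at x within {0..1})"
    if "x \<in> {0..1}" for x using Qb_deriv[where del=del and del'=del', OF eps(1) kap_pos that dd[OF that]] .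
  have dZ: "(Zb eps kap l0 gam has_real_derivative c * (rb x - rK) - gam' x - c * l0 * exp (- (kap / eps) * x) - eps) (at x within {0..1})"
    if "x \<in> {0..1}" for x using Zb_deriv[where gam=gam and gam'=gam', OF eps(1) kap_pos that dg[OF that]] .
  have e1': "eps + c * l0 * eps / kap \<le> mu / 2"
  proof -
    have "c * l0 * eps / kap \<le> c * Lmax * eps / kap"
      using l0b c_pos eps kap_pos by (intro divide_right_mono mult_right_mono mult_left_mono) auto
    then show ?thesis using e1 by linarith
  qed
  have "\<forall>x\<in>{0..1}. Qb eps kap l0 del x < rh eps v x \<and> Zb eps kap l0 gam x < Vh eps v x"
  proof (rule compare_lower[where f="\<lambda>p a. fF eps (cl B0 p) (cl B0 a)" and g="\<lambda>p. c * (cl B0 p - rK)"])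
    show "continuous_on {0..1} (rh eps v)" by (rule rh_cont[OF eps(1)])
    show "continuous_on {0..1} (Vh eps v)" by (rule Vh_cont[OF eps(1)])
    show "continuous_on {0..1} (Qb eps kap l0 del)" by (rule DERIV_continuous_on, rule dQ)
    show "continuous_on {0..1} (Zb eps kap l0 gam)" by (rule DERIV_continuous_on, rule dZ)
    fix x :: real assume x: "x \<in> {0..1}"
    show "(rh eps v has_real_derivative fF eps (cl B0 (rh eps v x)) (cl B0 (Vh eps v x))) (at x within {0..1})"
      by (rule rh_deriv[OF eps(1) x])
    show "(Vh eps v has_real_derivative c * (cl B0 (rh eps v x) - rK)) (at x within {0..1})"
      by (rule Vh_deriv[OF eps(1) x])
    show "(Qb eps kap l0 del has_real_derivative rbd x - del' x + (kap / eps) * (l0 * exp (- (kap / eps) * x))) (at x within {0..1})"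
      by (rule dQ[OF x])
    show "(Zb eps kap l0 gam has_real_derivative c * (rb x - rK) - gam' x - c * l0 * exp (- (kap / eps) * x) - eps) (at x within {0..1})"
      by (rule dZ[OF x])
    have clQ: "cl B0 (Qb eps kap l0 del x) = Qb eps kap l0 del x"
      using box_P(2)[OF eps(1,2) x _ l0b] bd[OF x] by (intro cl_id) auto
    have clZ: "cl B0 (Zb eps kap l0 gam x) = Zb eps kap l0 gam x"
      using box_W(2)[OF eps(1,2) x _ l0b] bd[OF x] by (intro cl_id) auto
    have Mbx: "\<bar>rbd x - del' x\<bar> \<le> Mb"
    proof -
      have "\<bar>rbd x\<bar> \<le> M1" "\<bar>del' x\<bar> \<le> A * Lg * gmax * exp Lg" using bnds[OF x] bd[OF x] by auto
      then show ?thesis unfolding Mb_def by linarith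
    qed
    have kk: "kap \<le> 2 * kap" using kap_pos by linarith
    have lc: "l0 * exp (- (kap / eps) * x) \<le> 2 * rb x - 1 - 2 * del x - kap"
      unfolding l0_def by (rule lconstr[OF eps _ x]) (use bd in blast)
    note li = lower_ineq[where gam=gam and del=del and gam'=gam' and del'=del',
        OF eps(1) kap_pos l0b(1) mu x a[OF x] b[OF x] kap_pos kk lc Mbx e1' e2]
    show "rbd x - del' x + kap / eps * (l0 * exp (- (kap / eps) * x))
        < fF eps (cl B0 (Qb eps kap l0 del x)) (cl B0 (Zb eps kap l0 gam x))"
      unfolding clQ clZ using li(1) by blast
    show "c * (rb x - rK) - gam' x - c * l0 * exp (- (kap / eps) * x) - eps < c * (cl B0 (Qb eps kap l0 del x) - rK)"
      unfolding clQ using li(2) by blast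
  next
    fix p a b :: real assume "a \<le> b" then show "fF eps (cl B0 p) (cl B0 a) \<le> fF eps (cl B0 p) (cl B0 b)"
      by (rule fmono[OF eps(1)])
  next
    fix a b :: real assume "a \<le> b" then show "c * (cl B0 a - rK) \<le> c * (cl B0 b - rK)" by (rule gmono)
  next
    show "Qb eps kap l0 del 0 < rh eps v 0" using rh_0[OF eps(1)] eps by (simp add: Qb_def l0_def l0l_def)
    show "Zb eps kap l0 gam 0 < Vh eps v 0" using rh_0[OF eps(1)] v by (simp add: Zb_def)
  qed
  then show ?thesis by (simp add: l0_def)
qed

end


context mainset begin

definition "epsOK g eps \<longleftrightarrow> 0 < eps \<and> eps \<le> 1 \<and> eps \<le> sg / 4 \<and> eps \<le> m0 / 2 \<and> Lmax * eps / (kap * x1) \<le> m0 / 4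
  \<and> eps + c * Lmax * eps / kap \<le> g / 8 \<and> eps * Mb < g / 4 \<and> Lmax * eps / kap < B * g"

lemma Mb_nn: "Mb \<ge> 0" using M1_nn A_pos Lg_pos gmax_pos by (simp add: Mb_def)

lemma epsOK_ex: "g > 0 \<Longrightarrow> \<exists>e0>0. \<forall>eps. 0 < eps \<and> eps < e0 \<longrightarrow> epsOK g eps"
proof -
  assume g: "g > 0"
  define k1 where "k1 = m0 / 4 * (kap * x1) / Lmax"
  define T where "T = 1 + c * Lmax / kap"
  define k2 where "k2 = g / (8 * T)"
  define k3 where "k3 = (g / 4) / (Mb + 1)"
  define k4 where "k4 = (B * g) * kap / Lmax / 2"
  define e0 where "e0 = min 1 (min (sg / 4) (min (m0 / 2) (min k1 (min k2 (min k3 k4)))))"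
  have p0: "0 < T" unfolding T_def using c_pos Lmax_ge1 kap_pos by (simp add: add_pos_nonneg)
  have pos: "0 < k1" "0 < k2" "0 < k3" "0 < k4"
    using p0 m0_pos kap_pos x1_pos Lmax_ge1 g c_pos Mb_nn B_pos by (auto simp: k1_def k3_def k4_def k2_def simp del: divide_divide_eq_left' intro!: divide_pos_pos)
  have e0: "e0 > 0" unfolding e0_def using pos sg_pos m0_pos by simp
  show ?thesis
  proof (intro exI[of _ e0] conjI e0 allI impI)
    fix eps assume eps: "0 < eps \<and> eps < e0"
    then have le: "0 < eps" "eps \<le> 1" "eps \<le> sg / 4" "eps \<le> m0 / 2" "eps \<le> k1" "eps \<le> k2" "eps \<le> k3" "eps < k4"
      unfolding e0_def by auto
    have c1: "Lmax * eps / (kap * x1) \<le> m0 / 4"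
    proof -
      have "Lmax * eps \<le> Lmax * k1" using le Lmax_ge1 by (intro mult_left_mono) auto
      also have "\<dots> = m0 / 4 * (kap * x1)" using Lmax_ge1 by (simp add: k1_def)
      finally show ?thesis using kap_pos x1_pos by (simp add: divide_le_eq mult.commute)
    qed
    have c2: "eps + c * Lmax * eps / kap \<le> g / 8"
    proof -
      have "eps + c * Lmax * eps / kap = eps * T" by (simp add: T_def algebra_simps)
      also have "\<dots> \<le> k2 * T" using le p0 by (intro mult_right_mono) auto
      also have "\<dots> = g / 8" using p0 by (simp add: k2_def)
      finally show ?thesis .
    qed
    have c3: "eps * Mb < g / 4"
    proof -
      have "eps * Mb < eps * (Mb + 1)" using le by simp
      also have "\<dots> \<le> k3 * (Mb + 1)" using le Mb_nn by (intro mult_right_mono) auto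
      also have "\<dots> = g / 4" using Mb_nn by (simp add: k3_def field_simps)
      finally show ?thesis .
    qed
    have c4: "Lmax * eps / kap < B * g"
    proof -
      have "Lmax * eps < Lmax * k4" using le Lmax_ge1 by (intro mult_strict_left_mono) auto
      also have "\<dots> = B * g * kap / 2" using Lmax_ge1 by (simp add: k4_def)
      finally have "Lmax * eps / kap < B * g / 2" using kap_pos by (simp add: divide_less_eq mult.commute)
      moreover have "B * g > 0" using B_pos g by simp
      ultimately show ?thesis by linarith
    qed
    show "epsOK g eps" unfolding epsOK_def using le c1 c2 c3 c4 by auto
  qed
qed

end


context mainset begin

lemma epsOK_e: "epsOK g eps \<Longrightarrow> eps + c * Lmax * eps / kap \<le> g / 8 \<and> eps * Mb < g / 4"
  by (simp add: epsOK_def)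

lemma gI_deriv: "((\<lambda>x. g * exp (Lg * x)) has_real_derivative Lg * (g * exp (Lg * x))) (at x within S)"
  by (auto intro!: derivative_eq_intros)

lemma dI_deriv: "((\<lambda>x. A * (g * exp (Lg * x))) has_real_derivative A * (Lg * (g * exp (Lg * x)))) (at x within S)"
  by (auto intro!: derivative_eq_intros)

lemma const_deriv: "((\<lambda>x. k) has_real_derivative 0) (at x within S)"
  by (auto intro!: derivative_eq_intros)

lemma expLg: "x \<in> {0..1} \<Longrightarrow> 1 \<le> exp (Lg * x) \<and> exp (Lg * x) \<le> exp Lg"
  using Lg_pos by (auto simp: mult_left_le)

lemma two_le: "x \<in> {0..1} \<Longrightarrow> 2 \<le> (2 * rb x - 1) * A"
proof -
  assume x: "x \<in> {0..1}"
  have "m0 * A \<le> (2 * rb x - 1) * A" using bnds[OF x] A_pos by (intro mult_right_mono) auto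
  moreover have "m0 * A = 2" using m0_pos by (simp add: A_def)
  ultimately show ?thesis by simp
qed

lemma half_ge: "x \<in> {0..1} \<Longrightarrow> (2 * rb x - 1) * B \<le> 1 / 2"
proof -
  assume x: "x \<in> {0..1}"
  have "(2 * rb x - 1) * B \<le> Mr * B" using bnds[OF x] B_pos by (intro mult_right_mono) auto
  moreover have "Mr * B = 1 / 2" using Mr_ge m0_pos by (simp add: B_def)
  ultimately show ?thesis by simp
qed

lemma bdI:
  assumes g: "0 < g" "g \<le> gmax" and x: "x \<in> {0..1}"
  shows "\<bar>A * (g * exp (Lg * x))\<bar> \<le> D0 \<and> \<bar>g * exp (Lg * x)\<bar> \<le> gmax * exp Lg \<and> \<bar>A * (Lg * (g * exp (Lg * x)))\<bar> \<le> A * Lg * gmax * exp Lg"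
proof -
  have ge: "g * exp (Lg * x) \<le> gmax * exp Lg" using expLg[OF x] g by (intro mult_mono) auto
  have p: "0 \<le> g * exp (Lg * x)" using g by simp
  have "A * (g * exp (Lg * x)) \<le> A * (gmax * exp Lg)" using ge A_pos by (intro mult_left_mono) auto
  then have "A * (g * exp (Lg * x)) \<le> D0" using gmax_props(1) by (simp add: mult.assoc)
  moreover have "A * (Lg * (g * exp (Lg * x))) \<le> A * (Lg * (gmax * exp Lg))"
    using ge A_pos Lg_pos by (intro mult_left_mono) auto
  ultimately show ?thesis using p ge A_pos Lg_pos g by (simp add: abs_mult mult.assoc)
qed

lemma typeI_up:
  assumes g: "0 < g" "g \<le> gmax" and ok: "epsOK g eps" and v: "v < Vb 0 + g"
  shows "\<forall>x\<in>{0..1}. rh eps v x < Pb eps kap (l0u eps (A * g)) (\<lambda>x. A * (g * exp (Lg * x))) x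
      \<and> Vh eps v x < Wb eps kap (l0u eps (A * g)) (\<lambda>x. g * exp (Lg * x)) x"
proof -
  have eps: "0 < eps" "eps \<le> 1" using ok by (auto simp: epsOK_def)
  have "\<forall>x\<in>{0..1}. rh eps v x < Pb eps kap (l0u eps ((\<lambda>x. A * (g * exp (Lg * x))) 0)) (\<lambda>x. A * (g * exp (Lg * x))) x
      \<and> Vh eps v x < Wb eps kap (l0u eps ((\<lambda>x. A * (g * exp (Lg * x))) 0)) (\<lambda>x. g * exp (Lg * x)) x"
  proof (rule up_cmp[OF eps g(1) gI_deriv dI_deriv])
    fix x :: real assume x: "x \<in> {0..1}"
    show "\<bar>A * (g * exp (Lg * x))\<bar> \<le> D0 \<and> \<bar>g * exp (Lg * x)\<bar> \<le> gmax * exp Lg \<and> \<bar>A * (Lg * (g * exp (Lg * x)))\<bar> \<le> A * Lg * gmax * exp Lg"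
      by (rule bdI[OF g x])
    show "c * (A * (g * exp (Lg * x))) \<le> Lg * (g * exp (Lg * x))" by (simp add: Lg_def)
    have ge: "g \<le> g * exp (Lg * x)" using expLg[OF x] g by simp
    have "(2 * rb x - 1) * (A * (g * exp (Lg * x))) \<ge> 2 * (g * exp (Lg * x))"
      using two_le[OF x] g by (simp add: mult.assoc[symmetric])
    then show "g * exp (Lg * x) - (2 * rb x - 1) * (A * (g * exp (Lg * x))) \<le> - g" using ge by linarith
  next
    show "eps + c * Lmax * eps / kap \<le> g / 2" using epsOK_e[OF ok] g by linarith
    show "eps * Mb < g" using epsOK_e[OF ok] g by linarith
    show "v < Vb 0 + g * exp (Lg * 0)" using v by simp
  qed
  then show ?thesis by simp
qed

lemma typeI_lo:
  assumes g: "0 < g" "g \<le> gmax" and ok: "epsOK g eps" and v: "v > Vb 0 - g"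
  shows "\<forall>x\<in>{0..1}. Qb eps kap (l0l eps (A * g)) (\<lambda>x. A * (g * exp (Lg * x))) x < rh eps v x
      \<and> Zb eps kap (l0l eps (A * g)) (\<lambda>x. g * exp (Lg * x)) x < Vh eps v x"
proof -
  have eps: "0 < eps" "eps \<le> 1" "eps \<le> sg / 4" "eps \<le> m0 / 2" "Lmax * eps / (kap * x1) \<le> m0 / 4"
    using ok by (auto simp: epsOK_def)
  have g2: "0 < g / 2" using g by simp
  have "\<forall>x\<in>{0..1}. Qb eps kap (l0l eps ((\<lambda>x. A * (g * exp (Lg * x))) 0)) (\<lambda>x. A * (g * exp (Lg * x))) x < rh eps v x
      \<and> Zb eps kap (l0l eps ((\<lambda>x. A * (g * exp (Lg * x))) 0)) (\<lambda>x. g * exp (Lg * x)) x < Vh eps v x"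
  proof (rule lo_cmp[OF eps g2 gI_deriv dI_deriv])
    fix x :: real assume x: "x \<in> {0..1}"
    show "\<bar>A * (g * exp (Lg * x))\<bar> \<le> D0 \<and> \<bar>g * exp (Lg * x)\<bar> \<le> gmax * exp Lg \<and> \<bar>A * (Lg * (g * exp (Lg * x)))\<bar> \<le> A * Lg * gmax * exp Lg"
      by (rule bdI[OF g x])
    show "c * (A * (g * exp (Lg * x))) \<le> Lg * (g * exp (Lg * x))" by (simp add: Lg_def)
    define gm where "gm = g * exp (Lg * x)"
    have ge: "g \<le> gm" using expLg[OF x] g by (simp add: gm_def)
    have gm0: "gm > 0" using g by (simp add: gm_def)
    have t1: "(2 * rb x - 1) * (A * gm) \<ge> 2 * gm"
      using two_le[OF x] gm0 by (simp add: mult.assoc[symmetric])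
    have "A ^ 2 * gm \<le> A ^ 2 * (gmax * exp Lg)" using expLg[OF x] g A_pos unfolding gm_def
      by (intro mult_left_mono mult_mono) auto
    then have "A ^ 2 * gm \<le> 1 / 2" using gmax_props(2) by (simp add: mult.assoc)
    then have "(A * gm) ^ 2 \<le> gm / 2" using gm0
      by (simp add: power2_eq_square)
    then show "g / 2 \<le> (2 * rb x - 1) * (A * (g * exp (Lg * x))) - (A * (g * exp (Lg * x)))\<^sup>2 - g * exp (Lg * x)"
      using t1 ge unfolding gm_def[symmetric] by linarith
  next
    show "eps + c * Lmax * eps / kap \<le> g / 2 / 2" using epsOK_e[OF ok] g by linarith
    show "eps * Mb < g / 2" using epsOK_e[OF ok] g by linarith
    show "Vb 0 - g * exp (Lg * 0) < v" using v by simp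
  qed
  then show ?thesis by simp
qed

lemma typeII_up:
  assumes g: "0 < g" "g \<le> gmax" and ok: "epsOK g eps" and v: "v < Vb 0 - g"
  shows "rh eps v 1 < rb 1"
proof -
  have eps: "0 < eps" "eps \<le> 1" using ok by (auto simp: epsOK_def)
  have g2: "0 < g / 2" using g by simp
  have "\<forall>x\<in>{0..1}. rh eps v x < Pb eps kap (l0u eps ((\<lambda>x. - (B * g)) 0)) (\<lambda>x. - (B * g)) x
      \<and> Vh eps v x < Wb eps kap (l0u eps ((\<lambda>x. - (B * g)) 0)) (\<lambda>x. - g) x"
  proof (rule up_cmp[OF eps g2 const_deriv const_deriv])
    fix x :: real assume x: "x \<in> {0..1}"
    have "B * g \<le> D0" using gmax_props(3) g B_pos by (smt (verit) mult_left_mono)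
    moreover have "g \<le> gmax * exp Lg" using g gmax_pos Lg_pos by (smt (verit) exp_ge_one_plus_x_over_n_power_n exp_gt_zero mult_le_cancel_left1 one_le_exp_iff less_imp_le)
    ultimately show "\<bar>- (B * g)\<bar> \<le> D0 \<and> \<bar>- g\<bar> \<le> gmax * exp Lg \<and> \<bar>0\<bar> \<le> A * Lg * gmax * exp Lg"
      using g B_pos A_pos Lg_pos gmax_pos by auto
    show "c * - (B * g) \<le> 0" using c_pos B_pos g by simp
    have "(2 * rb x - 1) * (B * g) \<le> g / 2" using half_ge[OF x] g
      by (simp add: mult.assoc[symmetric])
    then show "- g - (2 * rb x - 1) * - (B * g) \<le> - (g / 2)" by simp
  next
    show "eps + c * Lmax * eps / kap \<le> g / 2 / 2" using epsOK_e[OF ok] g by linarith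
    show "eps * Mb < g / 2" using epsOK_e[OF ok] g by linarith
    show "v < Vb 0 + - g" using v by simp
  qed
  then have "rh eps v 1 < Pb eps kap (l0u eps (- (B * g))) (\<lambda>x. - (B * g)) 1" by auto
  also have "\<dots> < rb 1"
  proof -
    have l0: "0 \<le> l0u eps (- (B * g))" "l0u eps (- (B * g)) \<le> Lmax"
    proof -
      have "B * g \<le> B * gmax" using g B_pos by (intro mult_left_mono) auto
      then have "B * g \<le> D0" using gmax_props(3) by linarith
      then have "\<bar>- (B * g)\<bar> \<le> D0" using g B_pos by simp
      then show "0 \<le> l0u eps (- (B * g))" "l0u eps (- (B * g)) \<le> Lmax" using l0u_bd[OF eps] by auto
    qed
    have "exp (- (kap / eps) * 1) \<le> 1 / (kap / eps)" using exp_neg_le[of "kap / eps"] kap_pos eps by simp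
    then have "l0u eps (- (B * g)) * exp (- (kap / eps) * 1) \<le> Lmax * (eps / kap)"
      using l0 by (intro mult_mono) auto
    moreover have "Lmax * (eps / kap) < B * g" using ok by (simp add: epsOK_def)
    ultimately show ?thesis by (simp add: Pb_def)
  qed
  finally show ?thesis .
qed

lemma typeII_lo:
  assumes g: "0 < g" "g \<le> gmax" and ok: "epsOK g eps" and v: "v > Vb 0 + g"
  shows "rh eps v 1 > rb 1"
proof -
  have eps: "0 < eps" "eps \<le> 1" "eps \<le> sg / 4" "eps \<le> m0 / 2" "Lmax * eps / (kap * x1) \<le> m0 / 4"
    using ok by (auto simp: epsOK_def)
  have g4: "0 < g / 4" using g by simp
  have "\<forall>x\<in>{0..1}. Qb eps kap (l0l eps ((\<lambda>x. - (B * g)) 0)) (\<lambda>x. - (B * g)) x < rh eps v x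
      \<and> Zb eps kap (l0l eps ((\<lambda>x. - (B * g)) 0)) (\<lambda>x. - g) x < Vh eps v x"
  proof (rule lo_cmp[OF eps g4 const_deriv const_deriv])
    fix x :: real assume x: "x \<in> {0..1}"
    have "B * g \<le> D0" using gmax_props(3) g B_pos by (smt (verit) mult_left_mono)
    moreover have "g \<le> gmax * exp Lg" using g gmax_pos Lg_pos by (smt (verit) exp_ge_one_plus_x_over_n_power_n exp_gt_zero mult_le_cancel_left1 one_le_exp_iff less_imp_le)
    ultimately show "\<bar>- (B * g)\<bar> \<le> D0 \<and> \<bar>- g\<bar> \<le> gmax * exp Lg \<and> \<bar>0\<bar> \<le> A * Lg * gmax * exp Lg"
      using g B_pos A_pos Lg_pos gmax_pos by auto
    show "c * - (B * g) \<le> 0" using c_pos B_pos g by simp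
    have h1: "(2 * rb x - 1) * (B * g) \<le> g / 2" using half_ge[OF x] g
      by (simp add: mult.assoc[symmetric])
    have "B ^ 2 * g \<le> 1 / 4" using gmax_props(4) g B_pos by (smt (verit) mult_left_mono zero_le_power2)
    then have h2: "(B * g) ^ 2 \<le> g / 4" using g
      by (simp add: power2_eq_square)
    show "g / 4 \<le> (2 * rb x - 1) * - (B * g) - (- (B * g))\<^sup>2 - - g" using h1 h2 by simp
  next
    show "eps + c * Lmax * eps / kap \<le> g / 4 / 2" using epsOK_e[OF ok] g by linarith
    show "eps * Mb < g / 4" using epsOK_e[OF ok] g by linarith
    show "Vb 0 - - g < v" using v by simp
  qed
  then have "Qb eps kap (l0l eps (- (B * g))) (\<lambda>x. - (B * g)) 1 < rh eps v 1" by auto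
  moreover have "rb 1 < Qb eps kap (l0l eps (- (B * g))) (\<lambda>x. - (B * g)) 1"
  proof -
    have l0: "0 \<le> l0l eps (- (B * g))" "l0l eps (- (B * g)) \<le> Lmax"
    proof -
      have "B * g \<le> B * gmax" using g B_pos by (intro mult_left_mono) auto
      then have "B * g \<le> D0" using gmax_props(3) by linarith
      then have "\<bar>- (B * g)\<bar> \<le> D0" using g B_pos by simp
      then show "0 \<le> l0l eps (- (B * g))" "l0l eps (- (B * g)) \<le> Lmax" using l0l_bd[OF eps(1,2)] by auto
    qed
    have "exp (- (kap / eps) * 1) \<le> 1 / (kap / eps)" using exp_neg_le[of "kap / eps"] kap_pos eps by simp
    then have "l0l eps (- (B * g)) * exp (- (kap / eps) * 1) \<le> Lmax * (eps / kap)"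
      using l0 by (intro mult_mono) auto
    moreover have "Lmax * (eps / kap) < B * g" using ok by (simp add: epsOK_def)
    ultimately show ?thesis by (simp add: Qb_def)
  qed
  ultimately show ?thesis by simp
qed

end


context mainset begin

definition "g1 = gmax / 2"
definition "Svv eps = {v \<in> {Vb 0 - g1..Vb 0 + g1}. rb 1 \<le> rh eps v 1}"
definition "vst eps = Inf (Svv eps)"

lemma g1_pos: "g1 > 0" using gmax_pos by (simp add: g1_def)

lemma rh1_cont: "eps > 0 \<Longrightarrow> continuous_on UNIV (\<lambda>v. rh eps v 1)"
proof -
  assume eps: "eps > 0"
  define K where "K = exp (2 / eps * (2 + 2 * B0) + c)"
  show ?thesis
  proof (rule lipschitz_on_continuous_on[where L=K])
    show "K-lipschitz_on UNIV (\<lambda>v. rh eps v 1)"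
      unfolding lipschitz_on_def using rh_dep[OF eps z01(2)]
      by (auto simp: K_def dist_real_def mult.commute less_imp_le)
  qed
qed

lemma vst_props:
  assumes eta: "0 < eta" "eta \<le> g1" and ok: "epsOK (eta / 2) eps"
  shows "rh eps (vst eps) 1 = rb 1" "Vb 0 - eta \<le> vst eps" "vst eps \<le> Vb 0 + eta"
proof -
  have eps: "eps > 0" using ok by (simp add: epsOK_def)
  have e2: "0 < eta / 2" "eta / 2 \<le> gmax" using eta g1_pos by (auto simp: g1_def)
  have below: "rh eps v 1 < rb 1" if "v \<le> Vb 0 - eta" for v
    by (rule typeII_up[OF e2 ok]) (use that eta in auto)
  have above: "rh eps (Vb 0 + eta) 1 > rb 1"
    by (rule typeII_lo[OF e2 ok]) (use eta in auto)
  define S where "S = Svv eps"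
  have inS: "Vb 0 + eta \<in> S" using above eta g1_pos by (auto simp: S_def Svv_def)
  then have ne: "S \<noteq> {}" by auto
  have bb: "bdd_below S" by (auto simp: S_def Svv_def bdd_below_def)
  have cl: "closed S"
  proof -
    have "S = {Vb 0 - g1..Vb 0 + g1} \<inter> (\<lambda>v. rh eps v 1) -` {rb 1..}" by (auto simp: S_def Svv_def)
    moreover have "closed ({Vb 0 - g1..Vb 0 + g1} \<inter> (\<lambda>v. rh eps v 1) -` {rb 1..})"
      by (intro continuous_closed_preimage continuous_on_subset[OF rh1_cont[OF eps]] closed_atLeast closed_atLeastAtMost) auto
    ultimately show ?thesis by simp
  qed
  have vS: "vst eps \<in> S" unfolding vst_def S_def[symmetric] by (rule closed_contains_Inf[OF ne bb cl])
  have gt: "v > Vb 0 - eta" if "v \<in> S" for v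
  proof (rule ccontr)
    assume "\<not> v > Vb 0 - eta"
    then have "rh eps v 1 < rb 1" by (intro below) auto
    then show False using that by (auto simp: S_def Svv_def)
  qed
  have lo: "vst eps > Vb 0 - eta" using gt[OF vS] .
  show "Vb 0 - eta \<le> vst eps" using lo by simp
  show "vst eps \<le> Vb 0 + eta" unfolding vst_def S_def[symmetric] by (rule cInf_lower[OF inS bb])
  have ge: "rh eps (vst eps) 1 \<ge> rb 1" using vS by (auto simp: S_def Svv_def)
  show "rh eps (vst eps) 1 = rb 1"
  proof (rule ccontr)
    assume "rh eps (vst eps) 1 \<noteq> rb 1"
    then have d: "rh eps (vst eps) 1 - rb 1 > 0" using ge by simp
    define K where "K = exp (2 / eps * (2 + 2 * B0) + c)"
    have Kp: "K > 0" by (simp add: K_def)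
    define t where "t = min ((rh eps (vst eps) 1 - rb 1) / (2 * (K + 1))) ((vst eps - (Vb 0 - eta)) / 2)"
    have tp: "t > 0" using d lo Kp by (simp add: t_def)
    define v' where "v' = vst eps - t"
    have "\<bar>rh eps v' 1 - rh eps (vst eps) 1\<bar> \<le> \<bar>v' - vst eps\<bar> * K"
      using rh_dep[OF eps z01(2)] by (simp add: K_def)
    also have "\<dots> = t * K" using tp by (simp add: v'_def)
    also have "\<dots> \<le> (rh eps (vst eps) 1 - rb 1) / (2 * (K + 1)) * K"
      using Kp by (intro mult_right_mono) (auto simp: t_def)
    also have "\<dots> < (rh eps (vst eps) 1 - rb 1) / 2"
      using d Kp by (simp add: field_simps)
    finally have a: "\<bar>rh eps v' 1 - rh eps (vst eps) 1\<bar> < (rh eps (vst eps) 1 - rb 1) / 2" .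
    then have "rh eps v' 1 - rh eps (vst eps) 1 > - ((rh eps (vst eps) 1 - rb 1) / 2)" by (simp only: abs_less_iff) linarith
    then have r: "rh eps v' 1 > rb 1" using d by argo
    have "t \<le> (vst eps - (Vb 0 - eta)) / 2" unfolding t_def by (rule min.cobounded2)
    then have "v' > Vb 0 - eta" using lo by (simp add: v'_def)
    moreover have "v' < vst eps" using tp by (simp add: v'_def)
    moreover have "vst eps \<le> Vb 0 + g1" using vS by (auto simp: S_def Svv_def)
    ultimately have "v' \<in> S" using r eta by (auto simp: S_def Svv_def)
    then have "vst eps \<le> v'" unfolding vst_def S_def[symmetric] by (rule cInf_lower[OF _ bb])
    then show False using tp by (simp add: v'_def)
  qed
qed

end


lemma W12_int:
  assumes "W12 phi dphi"
  shows "integrable lborel (\<lambda>x. indicator {0..1} x * dphi x)"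
proof -
  have m: "(\<lambda>x. indicator {0..1} x * dphi x) \<in> borel_measurable lborel"
    using assms by (simp add: W12_def set_borel_measurable_def)
  have i2: "integrable lborel (\<lambda>x. indicator {0..1} x * (dphi x)^2)"
    using assms by (simp add: W12_def set_integrable_def)
  have i1: "integrable lborel (\<lambda>x. indicator {0..1::real} x :: real)"
    by (intro integrable_real_indicator) auto
  have "integrable lborel (\<lambda>x. indicator {0..1} x + indicator {0..1} x * (dphi x)^2)"
    using i1 i2 by (rule Bochner_Integration.integrable_add)
  then show ?thesis
  proof (rule Bochner_Integration.integrable_bound)
    show "(\<lambda>x. indicator {0..1} x * dphi x) \<in> borel_measurable lborel" by (rule m)
    show "AE x in lborel. norm (indicator {0..1} x * dphi x) \<le> norm (indicator {0..1} x + indicator {0..1} x * (dphi x)^2)"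
    proof (intro AE_I2)
      fix x
      have h: "0 \<le> (\<bar>dphi x\<bar> - 1) * (\<bar>dphi x\<bar> - 1)" by simp
      have "\<bar>dphi x\<bar> * \<bar>dphi x\<bar> = (dphi x)^2" by (simp add: power2_eq_square abs_mult_self_eq)
      then have "\<bar>dphi x\<bar> \<le> 1 + (dphi x)^2" using h by (simp add: algebra_simps)
      then show "norm (indicator {0..1} x * dphi x) \<le> norm (indicator {0..1} x + indicator {0..1} x * (dphi x)^2)"
        by (auto simp: indicator_def)
    qed
  qed
qed

lemma ibp:
  fixes q q' phi dphi :: "real \<Rightarrow> real"
  assumes dq: "\<And>x. x \<in> {0..1} \<Longrightarrow> (q has_real_derivative q' x) (at x within {0..1})"
    and cq': "continuous_on {0..1} q'"
    and W: "W12 phi dphi" and p0: "phi 0 = 0" and p1: "phi 1 = 0"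
  shows "(LINT x:{0..1}|lborel. q x * dphi x + q' x * phi x) = 0"
proof -
  define D where "D x = indicator {0..1} x * dphi x" for x :: real
  define R where "R t = indicator {0..1} t * q' t" for t :: real
  have Dint: "integrable lborel D" unfolding D_def by (rule W12_int[OF W])
  have Dm[measurable]: "D \<in> borel_measurable lborel" using Dint by auto
  have Rm[measurable]: "R \<in> borel_measurable lborel"
    unfolding R_def using borel_measurable_continuous_on_indicator[OF _ cq'] by (simp add: measurable_lborel1)
  have cq: "continuous_on {0..1} q" using dq DERIV_continuous_on by blast
  obtain Cq where Cq0: "\<forall>t\<in>{0..1}. \<bar>q' t\<bar> \<le> Cq"
    using compact_imp_bounded[OF compact_continuous_image[OF cq' compact_Icc]]
    by (auto simp: bounded_iff)
  then have Cq: "\<And>t. t \<in> {0..1} \<Longrightarrow> \<bar>q' t\<bar> \<le> Cq" by blast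
  have R_bd: "\<bar>R t\<bar> \<le> Cq * indicator {0..1} t" for t using Cq[of t] by (auto simp: R_def indicator_def)
  have ind_int: "integrable lborel (\<lambda>t. indicator {0..1::real} t :: real)"
    by (intro integrable_real_indicator) auto
  have phi_eq: "phi t = (\<integral>x. indicator {0..t} x * dphi x \<partial>lborel)" if "t \<in> {0..1}" for t
    using W that p0 by (simp add: W12_def set_lebesgue_integral_def)
  define f where "f x t = D x * ((if x \<le> t then 1 else 0) * R t)" for x t :: real

  have fm: "(\<lambda>z. f (fst z) (snd z)) \<in> borel_measurable (lborel \<Otimes>\<^sub>M lborel)"
    unfolding f_def by measurable
  have fxm[measurable]: "(\<lambda>t. f x t) \<in> borel_measurable lborel" for x
    unfolding f_def by measurable
  have fx_int: "integrable lborel (\<lambda>t. f x t)" for x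
  proof (rule Bochner_Integration.integrable_bound)
    show "integrable lborel (\<lambda>t. \<bar>D x\<bar> * (Cq * indicator {0..1::real} t))"
      by (intro integrable_mult_right ind_int)
    show "AE t in lborel. norm (f x t) \<le> norm (\<bar>D x\<bar> * (Cq * indicator {0..1::real} t))"
    proof (intro AE_I2)
      fix t
      have "\<bar>f x t\<bar> \<le> \<bar>D x\<bar> * \<bar>R t\<bar>" by (auto simp: f_def abs_mult)
      also have "\<dots> \<le> \<bar>D x\<bar> * (Cq * indicator {0..1::real} t)" using R_bd[of t] by (intro mult_left_mono) auto
      finally show "norm (f x t) \<le> norm (\<bar>D x\<bar> * (Cq * indicator {0..1::real} t))" by simp
    qed
  qed (rule fxm)
  have fint: "integrable (lborel \<Otimes>\<^sub>M lborel) (case_prod f)"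
  proof (rule lborel_pair.Fubini_integrable)
    show "case_prod f \<in> borel_measurable (lborel \<Otimes>\<^sub>M lborel)" using fm by (simp add: split_beta')
    show "AE x in lborel. integrable lborel (\<lambda>t. case_prod f (x, t))" using fx_int by simp
    show "integrable lborel (\<lambda>x. \<integral>t. norm (case_prod f (x, t)) \<partial>lborel)"
    proof (rule Bochner_Integration.integrable_bound)
      show "integrable lborel (\<lambda>x. \<bar>D x\<bar> * (Cq * measure lborel {0..1::real}))"
        using Dint by auto
      show "(\<lambda>x. \<integral>t. norm (case_prod f (x, t)) \<partial>lborel) \<in> borel_measurable lborel"
        using fm by (simp add: split_beta') measurable
      show "AE x in lborel. norm (\<integral>t. norm (case_prod f (x, t)) \<partial>lborel) \<le> norm (\<bar>D x\<bar> * (Cq * measure lborel {0..1::real}))"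
      proof (intro AE_I2)
        fix x
        have "(\<integral>t. norm (f x t) \<partial>lborel) \<le> (\<integral>t. \<bar>D x\<bar> * (Cq * indicator {0..1::real} t) \<partial>lborel)"
        proof (rule integral_mono)
          show "integrable lborel (\<lambda>t. norm (f x t))" using fx_int by auto
          show "integrable lborel (\<lambda>t. \<bar>D x\<bar> * (Cq * indicator {0..1::real} t))" by (intro integrable_mult_right ind_int)
          fix t
          have "\<bar>f x t\<bar> \<le> \<bar>D x\<bar> * \<bar>R t\<bar>" by (auto simp: f_def abs_mult)
          also have "\<dots> \<le> \<bar>D x\<bar> * (Cq * indicator {0..1::real} t)" using R_bd[of t] by (intro mult_left_mono) auto
          finally show "norm (f x t) \<le> \<bar>D x\<bar> * (Cq * indicator {0..1::real} t)" by simp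
        qed
        also have "\<dots> = \<bar>D x\<bar> * (Cq * measure lborel {0..1::real})" by simp
        finally have "(\<integral>t. norm (f x t) \<partial>lborel) \<le> \<bar>D x\<bar> * (Cq * measure lborel {0..1::real})" .
        moreover have "0 \<le> (\<integral>t. norm (f x t) \<partial>lborel)" by simp
        ultimately show "norm (\<integral>t. norm (case_prod f (x, t)) \<partial>lborel) \<le> norm (\<bar>D x\<bar> * (Cq * measure lborel {0..1::real}))"
          by simp
      qed
    qed
  qed
  have F: "(\<integral>t. (\<integral>x. f x t \<partial>lborel) \<partial>lborel) = (\<integral>x. (\<integral>t. f x t \<partial>lborel) \<partial>lborel)"
    by (rule lborel_pair.Fubini_integral[OF fint])
  have in1: "(\<integral>x. f x t \<partial>lborel) = R t * phi t" for t
  proof (cases "t \<in> {0..1}")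
    case True
    have "(\<integral>x. f x t \<partial>lborel) = (\<integral>x. R t * (indicator {0..t} x * dphi x) \<partial>lborel)"
      by (rule Bochner_Integration.integral_cong) (use True in \<open>auto simp: f_def D_def indicator_def\<close>)
    also have "\<dots> = R t * phi t" using phi_eq[OF True] by simp
    finally show ?thesis .
  next
    case False
    then have "f x t = 0" for x by (simp add: f_def R_def)
    then show ?thesis using False by (simp add: R_def)
  qed
  have in2: "(\<integral>t. f x t \<partial>lborel) = D x * (q 1 - q x)" for x
  proof (cases "x \<in> {0..1}")
    case True
    have "(\<integral>t. f x t \<partial>lborel) = (\<integral>t. D x * (indicator {x..1} t *\<^sub>R q' t) \<partial>lborel)"
      by (rule Bochner_Integration.integral_cong) (use True in \<open>auto simp: f_def R_def indicator_def\<close>)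
    also have "\<dots> = D x * (\<integral>t. indicator {x..1} t *\<^sub>R q' t \<partial>lborel)" by simp
    also have "(\<integral>t. indicator {x..1} t *\<^sub>R q' t \<partial>lborel) = q 1 - q x"
    proof (rule integral_FTC_atLeastAtMost)
      show "x \<le> 1" using True by simp
      show "continuous_on {x..1} q'" using cq' by (rule continuous_on_subset) (use True in auto)
      fix y assume "x \<le> y" "y \<le> 1"
      then have "(q has_real_derivative q' y) (at y within {x..1})"
        using True by (intro has_field_derivative_subset[OF dq]) auto
      then show "(q has_vector_derivative q' y) (at y within {x..1})"
        by (simp add: has_real_derivative_iff_has_vector_derivative)
    qed
    finally show ?thesis .
  next
    case False
    then show ?thesis by (simp add: f_def D_def)
  qed
  have int1: "integrable lborel (\<lambda>t. R t * phi t)"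
    using lborel_pair.integrable_snd[OF fint] by (simp add: in1)
  have int2: "integrable lborel (\<lambda>x. D x * (q 1 - q x))"
    using lborel_pair.integrable_fst[OF fint] by (simp add: in2)
  have int3: "integrable lborel (\<lambda>x. D x * q x)"
  proof -
    have "integrable lborel (\<lambda>x. D x * q 1 - D x * (q 1 - q x))"
      using Dint int2 by (intro Bochner_Integration.integrable_diff) auto
    then show ?thesis by (simp add: algebra_simps)
  qed
  have D1: "(\<integral>x. D x \<partial>lborel) = 0" using phi_eq[of 1] p1 by (simp add: D_def)
  have eqF: "(\<integral>t. R t * phi t \<partial>lborel) = - (\<integral>x. D x * q x \<partial>lborel)"
  proof -
    have "(\<integral>t. R t * phi t \<partial>lborel) = (\<integral>x. D x * (q 1 - q x) \<partial>lborel)" using F by (simp add: in1 in2)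
    also have "\<dots> = (\<integral>x. D x * q 1 - D x * q x \<partial>lborel)" by (simp add: algebra_simps)
    also have "\<dots> = (\<integral>x. D x * q 1 \<partial>lborel) - (\<integral>x. D x * q x \<partial>lborel)"
      using Dint int3 by (intro Bochner_Integration.integral_diff) auto
    also have "(\<integral>x. D x * q 1 \<partial>lborel) = 0" using D1 by simp
    finally show ?thesis by simp
  qed
  have "(LINT x:{0..1}|lborel. q x * dphi x + q' x * phi x) = (\<integral>x. D x * q x + R x * phi x \<partial>lborel)"
    unfolding set_lebesgue_integral_def
    by (rule Bochner_Integration.integral_cong) (auto simp: D_def R_def indicator_def)
  also have "\<dots> = (\<integral>x. D x * q x \<partial>lborel) + (\<integral>x. R x * phi x \<partial>lborel)"
    using int3 int1 by (rule Bochner_Integration.integral_add)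
  also have "\<dots> = 0" using eqF by simp
  finally show ?thesis .
qed

lemma weak_from_classical:
  fixes rho V :: "real \<Rightarrow> real"
  assumes eps: "eps > 0"
    and crho: "continuous_on {0..1} rho" and cV: "continuous_on {0..1} V"
    and drho: "\<And>x. x \<in> {0..1} \<Longrightarrow> (rho has_real_derivative 2 / eps * (V x + rho x - (rho x)^2)) (at x within {0..1})"
    and dV: "\<And>x. x \<in> {0..1} \<Longrightarrow> (V has_real_derivative c * (rho x - rK)) (at x within {0..1})"
    and cc: "OmA + OmD = c" "OmA = c * rK"
    and b0: "rho 0 = alpha" and b1: "rho 1 = 1 - beta"
  shows "weak_sol eps OmA OmD alpha beta rho"
proof -
  define g where "g x = 2 / eps * (V x + rho x - (rho x)^2)" for x
  define q where "q x = V x + rho x - (rho x)^2" for x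
  define q' where "q' x = c * (rho x - rK) + (1 - 2 * rho x) * g x" for x
  have cg: "continuous_on {0..1} g" unfolding g_def[abs_def] by (intro continuous_intros crho cV)
  have cq': "continuous_on {0..1} q'" unfolding q'_def[abs_def] by (intro continuous_intros crho cg)
  have dr: "(rho has_real_derivative g x) (at x within {0..1})" if "x \<in> {0..1}" for x
    using drho[OF that] by (simp add: g_def)
  have dq: "(q has_real_derivative q' x) (at x within {0..1})" if x: "x \<in> {0..1}" for x
  proof -
    have "(q has_real_derivative c * (rho x - rK) + g x - 2 * rho x * g x) (at x within {0..1})"
      unfolding q_def[abs_def] using dV[OF x] dr[OF x]
      by (auto intro!: derivative_eq_intros simp: power2_eq_square algebra_simps)
    then show ?thesis by (simp add: q'_def algebra_simps)
  qed
  have W: "W12 rho g"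
    unfolding W12_def
  proof (intro conjI ballI)
    show "set_borel_measurable lborel {0..1} g"
      unfolding set_borel_measurable_def
      using borel_measurable_continuous_on_indicator[OF _ cg] by (simp add: measurable_lborel1)
    show "set_integrable lborel {0..1} (\<lambda>t. (g t)^2)"
      by (intro borel_integrable_atLeastAtMost' continuous_intros cg)
    fix x :: real assume x: "x \<in> {0..1}"
    have "(LINT t:{0..x}|lborel. g t) = rho x - rho 0"
      unfolding set_lebesgue_integral_def
    proof (rule integral_FTC_atLeastAtMost)
      show "0 \<le> x" using x by simp
      show "continuous_on {0..x} g" using cg by (rule continuous_on_subset) (use x in auto)
      fix y assume "0 \<le> y" "y \<le> x"
      then have "(rho has_real_derivative g y) (at y within {0..x})"
        using x by (intro has_field_derivative_subset[OF dr]) auto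
      then show "(rho has_vector_derivative g y) (at y within {0..x})"
        by (simp add: has_real_derivative_iff_has_vector_derivative)
    qed
    then show "rho x = rho 0 + (LINT t:{0..x}|lborel. g t)" by simp
  qed
  show ?thesis
    unfolding weak_sol_def
  proof (intro exI[of _ g] conjI allI impI W b0 b1)
    fix phi dphi assume h: "W12 phi dphi \<and> phi 0 = 0 \<and> phi 1 = 0"
    have "(LINT x:{0..1}|lborel. eps / 2 * g x * dphi x - ((2 * rho x - 1) * g x + OmA * (1 - rho x) - OmD * rho x) * phi x)
        = (LINT x:{0..1}|lborel. q x * dphi x + q' x * phi x)"
    proof (rule set_lebesgue_integral_cong)
      show "{0..1::real} \<in> sets lborel" by simp
      show "\<forall>x. x \<in> {0..1} \<longrightarrow> eps / 2 * g x * dphi x - ((2 * rho x - 1) * g x + OmA * (1 - rho x) - OmD * rho x) * phi x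
          = q x * dphi x + q' x * phi x"
      proof (intro allI impI)
        fix x :: real
        have e1: "eps / 2 * g x = q x" using eps by (simp add: g_def q_def)
        have e2: "(2 * rho x - 1) * g x + OmA * (1 - rho x) - OmD * rho x = - q' x"
        proof -
          have "OmA * (1 - rho x) - OmD * rho x = OmA - (OmA + OmD) * rho x" by (simp add: algebra_simps)
          also have "\<dots> = - (c * (rho x - rK))" using cc by (simp add: algebra_simps)
          finally show ?thesis by (simp add: q'_def algebra_simps)
        qed
        show "eps / 2 * g x * dphi x - ((2 * rho x - 1) * g x + OmA * (1 - rho x) - OmD * rho x) * phi x
          = q x * dphi x + q' x * phi x" by (simp only: e1 e2)
      qed
    qed
    also have "\<dots> = 0" using h by (intro ibp[OF dq cq']) auto
    finally show "(LINT x:{0..1}|lborel. eps / 2 * g x * dphi x - ((2 * rho x - 1) * g x + OmA * (1 - rho x) - OmD * rho x) * phi x) = 0" .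
  qed
qed



context mainset begin

lemma sol_good:
  assumes eta: "0 < eta" "eta \<le> g1" and ok1: "epsOK (eta / 2) eps" and ok2: "epsOK (2 * eta) eps"
  shows "\<forall>x\<in>{0..1}. Qb eps kap (l0l eps (A * (2 * eta))) (\<lambda>x. A * (2 * eta * exp (Lg * x))) x < rh eps (vst eps) x
      \<and> rh eps (vst eps) x < Pb eps kap (l0u eps (A * (2 * eta))) (\<lambda>x. A * (2 * eta * exp (Lg * x))) x"
    "\<forall>x\<in>{0..1}. \<bar>rh eps (vst eps) x\<bar> \<le> B0 \<and> \<bar>Vh eps (vst eps) x\<bar> \<le> B0"
proof -
  have eps: "0 < eps" "eps \<le> 1" using ok1 by (auto simp: epsOK_def)
  have g: "0 < 2 * eta" "2 * eta \<le> gmax" using eta by (auto simp: g1_def)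
  have v1: "vst eps < Vb 0 + 2 * eta" "vst eps > Vb 0 - 2 * eta"
    using vst_props(2,3)[OF eta ok1] eta by auto
  note U = typeI_up[OF g ok2 v1(1)] and L = typeI_lo[OF g ok2 v1(2)]
  show "\<forall>x\<in>{0..1}. Qb eps kap (l0l eps (A * (2 * eta))) (\<lambda>x. A * (2 * eta * exp (Lg * x))) x < rh eps (vst eps) x
      \<and> rh eps (vst eps) x < Pb eps kap (l0u eps (A * (2 * eta))) (\<lambda>x. A * (2 * eta * exp (Lg * x))) x"
    using U L by auto
  have AD: "\<bar>A * (2 * eta)\<bar> \<le> D0"
  proof -
    have "gmax * 1 \<le> gmax * exp Lg" using gmax_pos Lg_pos by (intro mult_left_mono) auto
    then have "2 * eta \<le> gmax * exp Lg" using g by linarith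
    then have "A * (2 * eta) \<le> A * (gmax * exp Lg)"
      using A_pos by (intro mult_left_mono) auto
    moreover have "A * (gmax * exp Lg) \<le> D0" using gmax_props(1) by (simp add: mult.assoc)
    ultimately have "A * (2 * eta) \<le> D0" by linarith
    moreover have "A * (2 * eta) > 0" using A_pos g by simp
    ultimately show ?thesis by simp
  qed
  show "\<forall>x\<in>{0..1}. \<bar>rh eps (vst eps) x\<bar> \<le> B0 \<and> \<bar>Vh eps (vst eps) x\<bar> \<le> B0"
  proof
    fix x :: real assume x: "x \<in> {0..1}"
    have b: "\<bar>A * (2 * eta * exp (Lg * x))\<bar> \<le> D0 \<and> \<bar>2 * eta * exp (Lg * x)\<bar> \<le> gmax * exp Lg \<and> \<bar>A * (Lg * (2 * eta * exp (Lg * x)))\<bar> \<le> A * Lg * gmax * exp Lg"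
      by (rule bdI[OF g x])
    have lu: "0 \<le> l0u eps (A * (2 * eta))" "l0u eps (A * (2 * eta)) \<le> Lmax" using l0u_bd[OF eps AD] by auto
    have ll: "0 \<le> l0l eps (A * (2 * eta))" "l0l eps (A * (2 * eta)) \<le> Lmax" using l0l_bd[OF eps AD] by auto
    have P: "\<bar>Pb eps kap (l0u eps (A * (2 * eta))) (\<lambda>x. A * (2 * eta * exp (Lg * x))) x\<bar> \<le> B0"
      by (rule box_P(1)[OF eps x _ lu]) (use b in auto)
    have Q: "\<bar>Qb eps kap (l0l eps (A * (2 * eta))) (\<lambda>x. A * (2 * eta * exp (Lg * x))) x\<bar> \<le> B0"
      by (rule box_P(2)[OF eps x _ ll]) (use b in auto)
    have W: "\<bar>Wb eps kap (l0u eps (A * (2 * eta))) (\<lambda>x. 2 * eta * exp (Lg * x)) x\<bar> \<le> B0"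
      by (rule box_W(1)[OF eps x _ lu]) (use b in auto)
    have Z: "\<bar>Zb eps kap (l0l eps (A * (2 * eta))) (\<lambda>x. 2 * eta * exp (Lg * x)) x\<bar> \<le> B0"
      by (rule box_W(2)[OF eps x _ ll]) (use b in auto)
    show "\<bar>rh eps (vst eps) x\<bar> \<le> B0 \<and> \<bar>Vh eps (vst eps) x\<bar> \<le> B0"
      using U[rule_format, OF x] L[rule_format, OF x] P Q W Z by (simp add: mult.assoc abs_le_iff)
  qed
qed

lemma weak_ok:
  assumes cc: "OmA + OmD = c" "OmA = c * rK" and beta: "rb 1 = 1 - beta"
    and ok1: "epsOK (g1 / 2) eps" and ok2: "epsOK gmax eps"
  shows "weak_sol eps OmA OmD alpha beta (rh eps (vst eps))"
proof -
  have eps: "0 < eps" using ok1 by (simp add: epsOK_def)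
  have ok2': "epsOK (2 * g1) eps" using ok2 by (simp add: g1_def)
  note good = sol_good(2)[OF g1_pos order_refl ok1 ok2']
  show ?thesis
  proof (rule weak_from_classical[OF eps rh_cont[OF eps] Vh_cont[OF eps] _ _ cc])
    fix x :: real assume x: "x \<in> {0..1}"
    have "cl B0 (rh eps (vst eps) x) = rh eps (vst eps) x" "cl B0 (Vh eps (vst eps) x) = Vh eps (vst eps) x"
      using good x by (auto intro: cl_id)
    then show "(rh eps (vst eps) has_real_derivative 2 / eps * (Vh eps (vst eps) x + rh eps (vst eps) x - (rh eps (vst eps) x)\<^sup>2)) (at x within {0..1})"
      "(Vh eps (vst eps) has_real_derivative c * (rh eps (vst eps) x - rK)) (at x within {0..1})"
      using rh_deriv[OF eps x, of "vst eps"] Vh_deriv[OF eps x, of "vst eps"] by (simp_all add: fF_def)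
  next
    show "rh eps (vst eps) 0 = alpha" by (rule rh_0(1)[OF eps])
    show "rh eps (vst eps) 1 = 1 - beta" using vst_props(1)[OF g1_pos order_refl ok1] beta by simp
  qed
qed

end


lemma maxle: "(a::real) \<ge> 0 \<Longrightarrow> max 0 (t - a) \<le> max 0 t" by (auto simp: max_def)

context mainset begin

lemma close:
  assumes D: "Dl > 0" and eta: "0 < eta" "eta \<le> g1" and sm: "A * (2 * eta) * exp Lg \<le> Dl / 4"
    and ok1: "epsOK (eta / 2) eps" and ok2: "epsOK (2 * eta) eps" and e3: "eps \<le> Dl / 4"
    and e4: "Lmax * eps / (kap * (Dl / (4 * (M1 + 1)))) \<le> Dl / 4"
  shows "rh eps (vst eps) \<in> nbhd (\<lambda>x. if x = 0 then alpha else rb x) Dl"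
  unfolding nbhd_def
proof (intro CollectI ballI)
  define f where "f = (\<lambda>x::real. if x = 0 then alpha else rb x)"
  define x2 where "x2 = Dl / (4 * (M1 + 1))"
  have eps: "0 < eps" "eps \<le> 1" using ok1 by (auto simp: epsOK_def)
  have x2p: "0 < x2" "x2 \<le> Dl" "M1 * x2 \<le> Dl / 4"
  proof -
    have M: "M1 + 1 \<ge> 1" using M1_nn by simp
    show "0 < x2" using D M1_nn by (simp add: x2_def)
    show "x2 \<le> Dl" unfolding x2_def using D M by (simp add: field_simps)
    show "M1 * x2 \<le> Dl / 4" unfolding x2_def using D M1_nn by (simp add: field_simps)
  qed
  fix x :: real assume x: "x \<in> {0..1}"
  define Wx where "Wx = {0..1} \<inter> {x - Dl..x + Dl}"
  have fb: "\<bar>f y\<bar> \<le> \<bar>alpha\<bar> + Rb" if "y \<in> Wx" for y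
    using that rb_abs[of y] rb_bd[OF z01(1)] by (auto simp: f_def Wx_def)
  have bdA: "bdd_above (f ` Wx)" using fb by (auto simp: bdd_above_def abs_le_iff intro!: exI[of _ "\<bar>alpha\<bar> + Rb"])
  have bdB: "bdd_below (f ` Wx)" unfolding bdd_below_def
  proof (intro exI[of _ "- (\<bar>alpha\<bar> + Rb)"] ballI)
    fix z assume "z \<in> f ` Wx"
    then obtain y where "y \<in> Wx" "z = f y" by auto
    then show "- (\<bar>alpha\<bar> + Rb) \<le> z" using fb[of y] by linarith
  qed
  have up: "f y \<le> Sup (f ` Wx)" if "y \<in> Wx" for y using cSup_upper[OF imageI[OF that] bdA] .
  have lo: "Inf (f ` Wx) \<le> f y" if "y \<in> Wx" for y using cInf_lower[OF imageI[OF that] bdB] .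
  have xW: "x \<in> Wx" using x D by (auto simp: Wx_def)
  let ?r = "rh eps (vst eps) x"
  have main: "Inf (f ` Wx) - Dl < ?r \<and> ?r < Sup (f ` Wx) + Dl"
  proof (cases "x = 0")
    case True
    then have "?r = alpha" using rh_0(1)[OF eps(1)] by simp
    moreover have "f x = alpha" using True by (simp add: f_def)
    ultimately show ?thesis using up[OF xW] lo[OF xW] D by auto
  next
    case False
    then have xp: "x > 0" using x by auto
    have fx: "f x = rb x" using False by (simp add: f_def)
    have rS: "rb x \<le> Sup (f ` Wx)" "Inf (f ` Wx) \<le> rb x" using up[OF xW] lo[OF xW] fx by auto
    note good = sol_good(1)[OF eta ok1 ok2, rule_format, OF x]
    define dl where "dl = A * (2 * eta * exp (Lg * x))"
    have dl: "0 \<le> dl" "dl \<le> Dl / 4"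
    proof -
      show "0 \<le> dl" using A_pos eta by (simp add: dl_def)
      have "exp (Lg * x) \<le> exp Lg" using expLg[OF x] by simp
      then have "A * (2 * eta) * exp (Lg * x) \<le> A * (2 * eta) * exp Lg" using A_pos eta by (intro mult_left_mono) auto
      moreover have "dl = A * (2 * eta) * exp (Lg * x)" by (simp add: dl_def)
      ultimately show "dl \<le> Dl / 4" using sm by linarith
    qed
    define E where "E = exp (- (kap / eps) * x)"
    have E: "0 < E" "E \<le> 1" using xp kap_pos eps by (auto simp: E_def)
    define lu where "lu = l0u eps (A * (2 * eta))"
    define ll where "ll = l0l eps (A * (2 * eta))"
    have Ae: "A * (2 * eta) \<ge> 0" using A_pos eta by simp
    have lu: "0 \<le> lu" "lu \<le> max 0 (alpha - rb 0) + eps"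
      using eps maxle[OF Ae, of "alpha - rb 0"] by (auto simp: lu_def l0u_def)
    have ll: "0 \<le> ll" "ll \<le> max 0 (rb 0 - alpha) + eps"
      using eps maxle[OF Ae, of "rb 0 - alpha"] by (auto simp: ll_def l0l_def algebra_simps)
    have AD: "\<bar>A * (2 * eta)\<bar> \<le> D0"
    proof -
      have g1: "gmax * 1 \<le> gmax * exp Lg" using gmax_pos Lg_pos by (intro mult_left_mono) auto
      have g2: "2 * eta \<le> gmax" using eta by (simp add: g1_def)
      have "2 * eta \<le> gmax * exp Lg" using g1 g2 by linarith
      then have "A * (2 * eta) \<le> A * (gmax * exp Lg)" using A_pos by (intro mult_left_mono) auto
      moreover have "A * (gmax * exp Lg) \<le> D0" using gmax_props(1) by (simp add: mult.assoc)
      ultimately have "A * (2 * eta) \<le> D0" by linarith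
      then show ?thesis using Ae by simp
    qed
    have luL: "lu \<le> Lmax" "ll \<le> Lmax" using l0u_bd[OF eps AD] l0l_bd[OF eps AD] by (auto simp: lu_def ll_def)
    have P: "?r < rb x + dl + lu * E" using good by (simp add: Pb_def dl_def lu_def E_def)
    have Q: "rb x - dl - ll * E < ?r" using good by (simp add: Qb_def dl_def ll_def E_def)
    show ?thesis
    proof (cases "x \<le> x2")
      case True
      have zW: "0 \<in> Wx" using True x2p x by (auto simp: Wx_def)
      have aS: "alpha \<le> Sup (f ` Wx)" "Inf (f ` Wx) \<le> alpha" using up[OF zW] lo[OF zW] by (auto simp: f_def)
      have "\<bar>rb x - rb 0\<bar> \<le> M1 * x" by (rule rb_lip[OF x])
      also have "\<dots> \<le> M1 * x2" using True M1_nn by (intro mult_left_mono) auto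
      finally have rl0: "\<bar>rb x - rb 0\<bar> \<le> Dl / 4" using x2p by linarith
      have rl: "rb x - rb 0 \<le> Dl / 4" "rb 0 - rb x \<le> Dl / 4"
        using rl0 abs_ge_self[of "rb x - rb 0"] abs_ge_minus_self[of "rb x - rb 0"] by linarith+
      have luE: "lu * E \<le> lu" "ll * E \<le> ll" using E lu ll by (auto simp: mult_left_le)
      have "?r < Sup (f ` Wx) + Dl"
      proof (cases "alpha \<le> rb 0")
        case True
        then have "lu \<le> eps" using lu by simp
        then show ?thesis using P rS dl luE e3 D by linarith
      next
        case False
        then have "lu \<le> alpha - rb 0 + eps" using lu by simp
        then show ?thesis using P aS dl luE e3 D rl by linarith
      qed
      moreover have "Inf (f ` Wx) - Dl < ?r"
      proof (cases "rb 0 \<le> alpha")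
        case True
        then have "ll \<le> eps" using ll by simp
        then show ?thesis using Q rS dl luE e3 D by linarith
      next
        case False
        then have "ll \<le> rb 0 - alpha + eps" using ll by simp
        then show ?thesis using Q aS dl luE e3 D rl by linarith
      qed
      ultimately show ?thesis by simp
    next
      case False
      have "kap / eps * x2 \<le> kap / eps * x" using False kap_pos eps by (intro mult_left_mono) auto
      then have "E \<le> exp (- (kap / eps * x2))" by (simp add: E_def)
      also have "\<dots> \<le> 1 / (kap / eps * x2)" using kap_pos eps x2p by (intro exp_neg_le) auto
      also have "\<dots> = eps / (kap * x2)" by simp
      finally have E2: "E \<le> eps / (kap * x2)" .
      have "lu * E \<le> Lmax * (eps / (kap * x2))" using E2 lu luL E by (intro mult_mono) auto
      moreover have "ll * E \<le> Lmax * (eps / (kap * x2))" using E2 ll luL E by (intro mult_mono) auto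
      moreover have "Lmax * (eps / (kap * x2)) \<le> Dl / 4" using e4 by (simp add: x2_def)
      ultimately show ?thesis using P Q rS dl D by linarith
    qed
  qed
  show "Inf ((\<lambda>x. if x = 0 then alpha else rb x) ` ({0..1} \<inter> {x - Dl..x + Dl})) - Dl < rh eps (vst eps) x \<and>
        rh eps (vst eps) x < Sup ((\<lambda>x. if x = 0 then alpha else rb x) ` ({0..1} \<inter> {x - Dl..x + Dl})) + Dl"
    using main by (simp add: f_def Wx_def)
qed

end


context mainset begin

lemma final:
  assumes cc: "OmA + OmD = c" "OmA = c * rK" and beta: "rb 1 = 1 - beta"
  shows "\<exists>eps1>0. \<exists>rhos :: real \<Rightarrow> real \<Rightarrow> real.
           (\<forall>eps. 0 < eps \<and> eps < eps1 \<longrightarrow> weak_sol eps OmA OmD alpha beta (rhos eps)) \<and>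
           eps_lim rhos (\<lambda>x. if x = 0 then alpha else rb x)"
proof -
  obtain e1 where e1: "e1 > 0" "\<And>eps. 0 < eps \<and> eps < e1 \<Longrightarrow> epsOK (g1 / 2) eps"
    using epsOK_ex[of "g1 / 2"] g1_pos by auto
  obtain e2 where e2: "e2 > 0" "\<And>eps. 0 < eps \<and> eps < e2 \<Longrightarrow> epsOK gmax eps"
    using epsOK_ex[of gmax] gmax_pos by auto
  define rhos where "rhos = (\<lambda>eps. rh eps (vst eps))"
  show ?thesis
  proof (intro exI[of _ "min e1 e2"] exI[of _ rhos] conjI allI impI)
    show "0 < min e1 e2" using e1 e2 by simp
    fix eps assume "0 < eps \<and> eps < min e1 e2"
    then show "weak_sol eps OmA OmD alpha beta (rhos eps)"
      unfolding rhos_def using weak_ok[OF cc beta e1(2) e2(2)] by auto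
  next
    show "eps_lim rhos (\<lambda>x. if x = 0 then alpha else rb x)"
      unfolding eps_lim_def
    proof (intro allI impI)
      fix Dl :: real assume D: "Dl > 0"
      define eta where "eta = min g1 (Dl / (8 * A * exp Lg))"
      have eta: "0 < eta" "eta \<le> g1" using g1_pos D A_pos by (auto simp: eta_def)
      have sm: "A * (2 * eta) * exp Lg \<le> Dl / 4"
      proof -
        have "eta \<le> Dl / (8 * A * exp Lg)" by (simp add: eta_def)
        then have "eta * (8 * A * exp Lg) \<le> Dl" using A_pos by (simp add: pos_le_divide_eq)
        then show ?thesis by (simp add: algebra_simps)
      qed
      obtain ea where ea: "ea > 0" "\<And>eps. 0 < eps \<and> eps < ea \<Longrightarrow> epsOK (eta / 2) eps"
        using epsOK_ex[of "eta / 2"] eta by auto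
      obtain eb where eb: "eb > 0" "\<And>eps. 0 < eps \<and> eps < eb \<Longrightarrow> epsOK (2 * eta) eps"
        using epsOK_ex[of "2 * eta"] eta by auto
      define x2 where "x2 = Dl / (4 * (M1 + 1))"
      have x2p: "x2 > 0" using D M1_nn by (simp add: x2_def)
      define k where "k = Dl * (kap * x2) / (4 * Lmax)"
      have kp: "k > 0" using D kap_pos x2p Lmax_ge1 by (simp add: k_def)
      show "\<exists>eps0>0. \<forall>eps. 0 < eps \<and> eps < eps0 \<longrightarrow> rhos eps \<in> nbhd (\<lambda>x. if x = 0 then alpha else rb x) Dl"
      proof (intro exI[of _ "min (min ea eb) (min (Dl / 4) k)"] conjI allI impI)
        show "0 < min (min ea eb) (min (Dl / 4) k)" using ea eb D kp by simp
        fix eps assume eps: "0 < eps \<and> eps < min (min ea eb) (min (Dl / 4) k)"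
        have e4: "Lmax * eps / (kap * x2) \<le> Dl / 4"
        proof -
          have "eps \<le> k" using eps by simp
          then have "Lmax * eps \<le> Lmax * k" using Lmax_ge1 by (intro mult_left_mono) auto
          also have "\<dots> = Dl / 4 * (kap * x2)" using Lmax_ge1 by (simp add: k_def)
          finally show ?thesis using kap_pos x2p by (simp add: divide_le_eq)
        qed
        show "rhos eps \<in> nbhd (\<lambda>x. if x = 0 then alpha else rb x) Dl"
          unfolding rhos_def
        proof (rule close[OF D eta sm])
          show "epsOK (eta / 2) eps" using ea(2) eps by simp
          show "epsOK (2 * eta) eps" using eb(2) eps by simp
          show "eps \<le> Dl / 4" using eps by simp
          show "Lmax * eps / (kap * (Dl / (4 * (M1 + 1)))) \<le> Dl / 4" using e4 by (simp add: x2_def)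
        qed
      qed
    qed
  qed
qed

end

theorem mainTheorem19:
  fixes OmD K OmA alpha beta :: real and rhob :: "real \<Rightarrow> real"
  assumes "OmD > 0" and "K > 1" and "OmA = K * OmD"
    and "1/2 < 1 - beta" and "1 - beta \<noteq> K / (K + 1)"
    and rhob_ne: "\<forall>x\<in>{0..1}. rhob x \<noteq> 1/2"
    and rhob_ode: "\<forall>x\<in>{0..1}. (rhob has_real_derivative
          ((K + 1) * OmD * (rhob x - K / (K + 1)) / (2 * (rhob x - 1/2)))) (at x within {0..1})"
    and rhob_end: "rhob 1 = 1 - beta"
    and "alpha > 1 - rhob 0" and "alpha \<noteq> 1 - (1 - rhob 0)"
  shows "\<exists>eps1>0. \<exists>rhos :: real \<Rightarrow> real \<Rightarrow> real.
           (\<forall>eps. 0 < eps \<and> eps < eps1 \<longrightarrow> weak_sol eps OmA OmD alpha beta (rhos eps)) \<and>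
           eps_lim rhos (\<lambda>x. if x = 0 then alpha else rhob x)"
proof -
  define c where "c = (K + 1) * OmD"
  define rK where "rK = K / (K + 1)"
  have cpos: "c > 0" using assms(1,2) by (simp add: c_def)
  have rK1: "1/2 < rK" "rK < 1" using assms(2) by (auto simp: rK_def field_simps)
  have cont: "continuous_on {0..1} rhob"
    by (rule DERIV_continuous_on[where D="\<lambda>x. (K + 1) * OmD * (rhob x - K / (K + 1)) / (2 * (rhob x - 1/2))"])
      (use rhob_ode in blast)
  have gt: "rhob x > 1/2" if x: "x \<in> {0..1}" for x
  proof (rule ccontr)
    assume "\<not> rhob x > 1/2"
    then have "rhob x \<le> 1/2" by simp
    moreover have "1/2 \<le> rhob 1" using rhob_end assms(4) by simp
    moreover have "continuous_on {x..1} rhob" using cont by (rule continuous_on_subset) (use x in auto)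
    ultimately obtain y where "x \<le> y" "y \<le> 1" "rhob y = 1/2" using IVT'[of rhob x "1/2" 1] x by auto
    then show False using rhob_ne x by auto
  qed
  interpret R: rbset c rK rhob
  proof
    show "c > 0" by (rule cpos)
    show "1/2 < rK" "rK < 1" by (rule rK1)+
    fix x :: real assume x: "x \<in> {0..1}"
    show "rhob x > 1/2" by (rule gt[OF x])
    show "(rhob has_real_derivative c * (rhob x - rK) / (2 * (rhob x - 1 / 2))) (at x within {0..1})"
      using rhob_ode x by (simp add: c_def rK_def)
  qed
  obtain m0 Mr M1 where b: "m0 > 0" "M1 \<ge> 0" "\<forall>x\<in>{0..1}. m0 \<le> 2 * rhob x - 1 \<and> 2 * rhob x - 1 \<le> Mr \<and> \<bar>R.rbd x\<bar> \<le> M1"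
    using R.bounds by blast
  interpret M: mainset c rK rhob alpha m0 Mr M1
    by unfold_locales (use b assms(9) in auto)
  have cc: "OmA + OmD = c" "OmA = c * rK"
    using assms(2,3) by (auto simp: c_def rK_def field_simps)
  show ?thesis using M.final[OF cc rhob_end] .
qed


end
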